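(* Assume the standing hypotheses (H). (a) Let $0\le K\in L^4_{\mathfrak P}$. There is a nonnegative $K_1\in L^1_{\mathfrak P}$ (depending on $K$) such that for every $(t,\mathbf x)\in\mathbf D$, $\boldsymbol\zeta\in\mathbf Z(t,\mathbf x)$ and $\psi\in(0,1)$ with $\|\boldsymbol\zeta-\boldsymbol\zeta^0(\Sigma)\|\le K(t,\mathbf x)\psi$, we have $H^\psi_1(t,\mathbf x;\boldsymbol\zeta)\ge-\frac12\widetilde g(t,\mathbf x)\psi-K_1(t,\mathbf x)\psi^2$. (b) Let $0\le\bar K\in L^4_{\mathfrak P}$. There is a nonnegative $K_1\in L^2_{\mathfrak P}$ (depending on $\bar K$) such that for every $(t,\mathbf x)\in\mathbf D$, $\boldsymbol\zeta\in\mathbf Z$ and $\psi\in(0,1)$ with $\|\boldsymbol\zeta-\boldsymbol\zeta^\psi(t,\mathbf x)\|\le\bar K(t,\mathbf x)\psi^2$, we have $H^\psi_1(t,\mathbf x;\boldsymbol\zeta)\le-\frac12\widetilde g(t,\mathbf x)\mathbf 1_{\{\Sigma\in(\underline\Sigma,\overline\Sigma)\}}\psi+K_1(t,\mathbf x)\psi^2$.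
   Context: Setting. Fix $T>0$, $S_0>0$, $\Sigma_0>0$, $A_0\in\mathbb R$. Let $\Omega$ be the set of continuous paths $\omega=(\omega^S,\omega^\Sigma,\omega^A):[0,T]\to\mathbb R^3$ with $\omega_0=(S_0,\Sigma_0,A_0)$, with the uniform topology and Borel $\sigma$-algebra $\mathcal F$; $S,\Sigma,A$ are the coordinate processes, $\mathbb F$ their raw filtration (all filtration notions refer to it), $M_t=\sup_{u\le t}S_u$, $\mathbf X_t=(S_t,A_t,M_t,\Sigma_t)$. $\mathbf G=\mathbb R_+\times\mathbb R\times\mathbb R_+$, $\mathbf D^0=(0,T)\times\mathbf G\times\mathbb R_+$ (points $(t,\mathbf x)$, $\mathbf x=(S,A,M,\Sigma)$); fix $0<\underline\Sigma<\Sigma_0<\overline\Sigma$, $\mathbf D=(0,T)\times\mathbf G\times[\underline\Sigma,\overline\Sigma]$. $\|\cdot\|$ Euclidean norm, $\|\cdot\|_F$ Frobenius norm, $\mathbf e_4$ fourth unit vector, $x^-=\max(-x,0)$. Call: maturity $T_{\mathsf C}$, payoff $\mathsf C$; $\mathcal C(t,S,\Sigma)$ satisfies $\mathcal C_t+\frac12\Sigma^2S^2\mathcal C_{SS}=0$, $\mathcal C(T_{\mathsf C},S,\Sigma)=\mathsf C(S)$. $b^{\mathcal C}(t,\mathbf x;\boldsymbol\zeta)=\nu\mathcal C_\Sigma+\frac12S^2\mathcal C_{SS}(\sigma^2-\Sigma^2)+\sigma\eta S\mathcal C_{S\Sigma}+\frac12(\eta^2+\xi)\mathcal C_{\Sigma\Sigma}$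 for $\boldsymbol\zeta=(\nu,\sigma,\eta,\xi)$. Models: $\mathfrak P^{00}$ = probability measures $P$ on $(\Omega,\mathcal F)$ with progressively measurable control $\boldsymbol\zeta^P=(\nu^P,\sigma^P,\eta^P,\xi^P)$ such that $S$ and $\Sigma-\int_0^\cdot\nu^P_tdt$ are continuous local $P$-martingales with $d\langle S\rangle_t=S_t^2(\sigma^P_t)^2dt$, $d\langle\Sigma\rangle_t=((\eta^P_t)^2+\xi^P_t)dt$, $d\langle S,\Sigma\rangle_t=S_t\sigma^P_t\eta^P_tdt$, $S,\Sigma>0$ a.s., $\xi^P\ge0$, $b^{\mathcal C}(t,\mathbf X_t;\boldsymbol\zeta^P_t)=0$ $dt\times P$-a.e. Given Borel $\alpha,\beta,\gamma,\delta:[0,T]\times\mathbb R^3\to\mathbb R$, $\mathfrak P^0$ = those $P\in\mathfrak P^{00}$ with $dA_t=(\alpha+\frac12(\sigma^P_t)^2\beta)dt+\gamma dS_t+\delta dM_t$ (coefficients at $(t,S_t,A_t,M_t)$). $\boldsymbol\zeta^0(\Sigma)=(0,\Sigma,0,0)^\top$; reference model: $\boldsymbol\zeta^P_t=\boldsymbol\zeta^0(\Sigma_t)$ $dt\times P$-a.e. Non-traded option: $\mathcal V(\cdot,\Sigma)$ solves $\mathcal V_t+(\alpha+\frac12\beta\Sigma^2)\mathcal V_A+\frac12\Sigma^2S^2(\mathcal V_{SS}+2\gamma\mathcal V_{SA}+\gamma^2\mathcal V_{AA})=0$ on $(0,T)\times\mathbf G$, $\delta\mathcal V_A+\mathcal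 V_M=0$ on $\{S\ge M\}$, $\mathcal V(T,\cdot,\Sigma)=\mathsf V$. $\Delta=\mathcal V_S+\gamma\mathcal V_A$, $\Gamma=\mathcal V_{SS}+2\gamma\mathcal V_{SA}+\gamma^2\mathcal V_{AA}$, $\frac{\partial\Delta}{\partial\Sigma}:=\mathcal V_{S\Sigma}+\gamma\mathcal V_{A\Sigma}$. P&L: $V_t=\mathcal V(t,\mathbf X_t)$, $C_t=\mathcal C(t,S_t,\Sigma_t)$; trading strategies $\boldsymbol\upsilon=(\theta,\phi)$ (real locally bounded progressively measurable); $Y^{\boldsymbol\upsilon,P}_t=Y_0+V_0+\int_0^t\theta dS+\int_0^t\phi dC-V_t$ for fixed $Y_0\in\mathbb R$. Preferences: $\Psi=\mathrm{diag}(\psi_\nu,\psi_\sigma,\psi_\eta,\psi_\xi)$ with positive entries, $\psi_{\min},\psi_{\max}$ their min and max, $f(\Sigma,\boldsymbol\zeta)=\frac12(\boldsymbol\zeta-\boldsymbol\zeta^0(\Sigma))^\top\Psi^{-1}(\boldsymbol\zeta-\boldsymbol\zeta^0(\Sigma))$; a utility $U$, a set $\mathfrak Y$ of strategies and $\mathfrak P\subset\mathfrak P^0$; $J^\psi(\boldsymbol\upsilon,P)=E^P[U(Y^{\boldsymbol\upsilon,P}_T)+\frac1\psi\int_0^TU'(Y^{\boldsymbol\upsilon,P}_t)f(\Sigma_t,\boldsymbol\zeta^P_t)dt]$. Candidate control: $\mathbf c=(\mathcal C_\Sigma,\Sigma S^2\mathcal C_{SS},\Sigma S\mathcal C_{S\Sigma},\frac12\mathcal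 C_{\Sigma\Sigma})^\top$, $\mathbf v=(\mathcal V_\Sigma,\Sigma(\beta\mathcal V_A+S^2\Gamma),\Sigma S\frac{\partial\Delta}{\partial\Sigma},\frac12\mathcal V_{\Sigma\Sigma})^\top$; $\lambda=\frac{\mathbf c^\top\Psi\mathbf v}{\mathbf c^\top\Psi\mathbf c}$ if $\mathcal V_{\Sigma\Sigma}-\frac{\mathbf c^\top\Psi\mathbf v}{\mathbf c^\top\Psi\mathbf c}\mathcal C_{\Sigma\Sigma}\ge0$, else $\lambda=\frac{\mathbf c^\top\Psi\mathbf v-\frac14\mathcal C_{\Sigma\Sigma}\mathcal V_{\Sigma\Sigma}\psi_\xi}{\mathbf c^\top\Psi\mathbf c-\frac14\mathcal C_{\Sigma\Sigma}^2\psi_\xi}$; $\mu=\frac12(\mathcal V_{\Sigma\Sigma}-\lambda\mathcal C_{\Sigma\Sigma})^-$; $\widetilde{\boldsymbol\zeta}=\Psi(\mathbf v-\lambda\mathbf c+\mu\mathbf e_4)$; $\boldsymbol\zeta^\psi=\boldsymbol\zeta^0(\Sigma)+\widetilde{\boldsymbol\zeta}\mathbf 1_{\{\underline\Sigma<\Sigma<\overline\Sigma\}}\psi$; $\widetilde g=\mathbf v^\top\widetilde{\boldsymbol\zeta}$. Cash-equivalent PDE: for each $\Sigma\in[\underline\Sigma,\overline\Sigma]$, $\widetilde w_t+(\alpha+\frac12\beta\Sigma^2)\widetilde w_A+\frac12\Sigma^2S^2(\widetilde w_{SS}+2\gamma\widetilde w_{SA}+\gamma^2\widetilde w_{AA})+\frac12\widetilde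 g(\cdot,\Sigma)=0$ on $(0,T)\times\mathbf G$, $\delta\widetilde w_A+\widetilde w_M=0$ on $\{S\ge M\}$, $\widetilde w(T,\cdot,\Sigma)=0$. $L^p_{\mathfrak P}$: Borel $K:\mathbf D^0\to\mathbb R$ with $\sup_{P\in\mathfrak P}E^P[\int_0^T|K(t,\mathbf X_t)|^pdt]^{1/p}<\infty$. Candidate asymptotic model family: $(P^\psi)_{\psi\in(0,\psi_0)}\subset\mathfrak P$, $\psi_0\in(0,1)$, with $K_0\in L^4_{\mathfrak P}$ such that $\|\boldsymbol\zeta^{P^\psi}_t-\boldsymbol\zeta^\psi(t,\mathbf X_t)\|\le K_0(t,\mathbf X_t)\psi^2$ $dt\times P^\psi$-a.e. Assumption (A): (a) $\exists K_{\mathfrak Y}>0$ with $Y^{\boldsymbol\upsilon,P}>-K_{\mathfrak Y}$ $dt\times P$-a.e. for all $\boldsymbol\upsilon\in\mathfrak Y$, $P\in\mathfrak P$; (b) $\mathfrak P$ contains a candidate asymptotic model family and a reference model, and constants $\underline\nu<0<\overline\nu$, $0<\underline\sigma<\underline\Sigma$, $\overline\Sigma<\overline\sigma$, $\underline\eta<0<\overline\eta$, $\overline\xi>0$ exist with $\nu^P\in[\underline\nu,\overline\nu]$, $\sigma^P\in[\underline\sigma,\overline\sigma]$, $\eta^P\in[\underline\eta,\overline\eta]$, $\xi^P\in[0,\overline\xi]$, $\Sigma\in[\underline\Sigma,\overline\Sigma]$ $dt\times P$-a.e. for all $P\in\mathfrak P$; (c) $T_{\mathsf C}\ge T$, $\mathcal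 C\in C^{1,2,2}((0,T_{\mathsf C})\times\mathbb R_+^2)\cap C([0,T_{\mathsf C}]\times\overline{\mathbb R}_+^2)$ solves the call PDE classically for $\Sigma\in[\underline\Sigma,\overline\Sigma]$, and $\mathcal C_\Sigma\ne0$, $|\mathcal C_{\Sigma\Sigma}|\le K_{\mathcal C}(|\mathcal C_\Sigma|+|S^2\mathcal C_{SS}|+|S\mathcal C_{S\Sigma}|)$ on $(0,T)\times\mathbb R_+\times[\underline\Sigma,\overline\Sigma]$, $K_{\mathcal C}\in L^2_{\mathfrak P}$; (d) $\mathcal V\in C^{1,2,2,1,2}(\mathbf D^0)\cap C(\overline{\mathbf D^0})$ solves the $\mathcal V$-PDE classically for $\Sigma\in[\underline\Sigma,\overline\Sigma]$ and $|\mathcal V_\Sigma|,|\beta\mathcal V_A+S^2\Gamma|,|S\frac{\partial\Delta}{\partial\Sigma}|,|\mathcal V_{\Sigma\Sigma}|\le K_{\mathcal V}$ on $\mathbf D$; (e) $\widetilde w\in C^{1,2,2,1,2}(\mathbf D^0)\cap C(\overline{\mathbf D^0})$ solves the cash-equivalent PDE classically for $\Sigma\in[\underline\Sigma,\overline\Sigma]$, $0\le\widetilde w\le K_{\widetilde w}$ on $\mathbf D$, and $\widetilde w_\Sigma$, $S(\widetilde w_S+\gamma\widetilde w_A)$, $\beta\widetilde w_A+S^2(\widetilde w_{SS}+2\gamma\widetilde w_{SA}+\gamma^2\widetilde w_{AA})$, $S(\widetilde w_{S\Sigma}+\gamma\widetilde w_{A\Sigma})$, $\widetilde w_{\Sigma\Sigma}\in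 L^4_{\mathfrak P}$; (f) $U\in C^3(\mathbb R)$, $U'>0$, $U''<0$, $-U''/U'$ nonincreasing. Additional notation. $\mathbf Z^0=\mathbb R^3\times[0,\infty)$; $\mathbf Z=[\underline\nu,\overline\nu]\times[\underline\sigma,\overline\sigma]\times[\underline\eta,\overline\eta]\times[0,\overline\xi]$; for $(t,\mathbf x)\in\mathbf D$: $\mathbf Z^0(t,\mathbf x)=\{\boldsymbol\zeta\in\mathbf Z^0:b^{\mathcal C}(t,\mathbf x;\boldsymbol\zeta)=0\}$, $\mathbf Z(t,\mathbf x)=\mathbf Z^0(t,\mathbf x)\cap\mathbf Z$. $\boldsymbol\upsilon^\star(t,\mathbf x)=(\Delta-\frac{\mathcal V_\Sigma}{\mathcal C_\Sigma}\mathcal C_S,\frac{\mathcal V_\Sigma}{\mathcal C_\Sigma})$, delta-vega hedge $\boldsymbol\upsilon^\star_t=\boldsymbol\upsilon^\star(t,\mathbf X_t)$. $H^\psi_1(t,\mathbf x;\boldsymbol\zeta)=\frac1{2\psi}(\boldsymbol\zeta-\boldsymbol\zeta^0(\Sigma))^\top\Psi^{-1}(\boldsymbol\zeta-\boldsymbol\zeta^0(\Sigma))-\mathbf v(t,\mathbf x)^\top(\boldsymbol\zeta-\boldsymbol\zeta^0(\Sigma))$. Standing hypotheses (H): Assumption (A) holds, $\boldsymbol\upsilon^\star\in\mathfrak Y$, and $(P^\psi)_{\psi\in(0,\psi_0)}\subset\mathfrak P$ is a candidate asymptotic model family. *)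

theory Defs
  imports "HOL-Probability.Probability"
begin

(* Points of \<real>^4 are nested pairs; the norm of the product type is the Euclidean norm.
  A state point is x = (S, A, M, \<Sigma>); a control is \<zeta> = (\<nu>, \<sigma>, \<eta>, \<xi>). *)

type_synonym real4 = "real \<times> real \<times> real \<times> real"

definition c1 :: "real4 \<Rightarrow> real" where "c1 z = fst z"
definition c2 :: "real4 \<Rightarrow> real" where "c2 z = fst (snd z)"
definition c3 :: "real4 \<Rightarrow> real" where "c3 z = fst (snd (snd z))"
definition c4 :: "real4 \<Rightarrow> real" where "c4 z = snd (snd (snd z))"

abbreviation xS :: "real4 \<Rightarrow> real" where "xS \<equiv> c1"
abbreviation xA :: "real4 \<Rightarrow> real" where "xA \<equiv> c2"
abbreviation xM :: "real4 \<Rightarrow> real" where "xM \<equiv> c3"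
abbreviation xSig :: "real4 \<Rightarrow> real" where "xSig \<equiv> c4"

definition comp4 :: "nat \<Rightarrow> real4 \<Rightarrow> real" where
  "comp4 i z = (if i = 1 then c1 z else if i = 2 then c2 z else if i = 3 then c3 z else c4 z)"
definition upd4 :: "nat \<Rightarrow> real \<Rightarrow> real4 \<Rightarrow> real4" where
  "upd4 i u z = (if i = 1 then u else c1 z, if i = 2 then u else c2 z,
                 if i = 3 then u else c3 z, if i = 4 then u else c4 z)"

definition wdot :: "real4 \<Rightarrow> real4 \<Rightarrow> real4 \<Rightarrow> real" where
  "wdot w a b = c1 w * c1 a * c1 b + c2 w * c2 a * c2 b + c3 w * c3 a * c3 b + c4 w * c4 a * c4 b"
definition dot4 :: "real4 \<Rightarrow> real4 \<Rightarrow> real" where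
  "dot4 a b = c1 a * c1 b + c2 a * c2 b + c3 a * c3 b + c4 a * c4 b"
definition inv4 :: "real4 \<Rightarrow> real4" where
  "inv4 w = (1 / c1 w, 1 / c2 w, 1 / c3 w, 1 / c4 w)"

definition negpart :: "real \<Rightarrow> real" where "negpart x = max (- x) 0"

definition Cdt :: "(real \<Rightarrow> real \<Rightarrow> real \<Rightarrow> real) \<Rightarrow> real \<Rightarrow> real \<Rightarrow> real \<Rightarrow> real" where
  "Cdt f t S s = deriv (\<lambda>u. f u S s) t"
definition CdS :: "(real \<Rightarrow> real \<Rightarrow> real \<Rightarrow> real) \<Rightarrow> real \<Rightarrow> real \<Rightarrow> real \<Rightarrow> real" where
  "CdS f t S s = deriv (\<lambda>u. f t u s) S"
definition CdSig :: "(real \<Rightarrow> real \<Rightarrow> real \<Rightarrow> real) \<Rightarrow> real \<Rightarrow> real \<Rightarrow> real \<Rightarrow> real" where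
  "CdSig f t S s = deriv (\<lambda>u. f t S u) s"

(* \<V>(t,x) with x = (S,A,M,\<Sigma>): partial in t, and partial in coordinate i
  (1 = S, 2 = A, 3 = M, 4 = \<Sigma>). *)
definition Vdt :: "(real \<Rightarrow> real4 \<Rightarrow> real) \<Rightarrow> real \<Rightarrow> real4 \<Rightarrow> real" where
  "Vdt f t x = deriv (\<lambda>u. f u x) t"
definition Vdx :: "nat \<Rightarrow> (real \<Rightarrow> real4 \<Rightarrow> real) \<Rightarrow> real \<Rightarrow> real4 \<Rightarrow> real" where
  "Vdx i f t x = deriv (\<lambda>u. f t (upd4 i u x)) (comp4 i x)"

definition C122_on :: "(real \<times> real \<times> real) set \<Rightarrow> (real \<Rightarrow> real \<Rightarrow> real \<Rightarrow> real) \<Rightarrow> bool" where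
  "C122_on U f \<longleftrightarrow>
    (\<forall>(t,S,s)\<in>U.
       (\<lambda>u. f u S s) differentiable (at t) \<and> (\<lambda>u. f t u s) differentiable (at S) \<and>
       (\<lambda>u. f t S u) differentiable (at s) \<and>
       (\<lambda>u. CdS f t u s) differentiable (at S) \<and> (\<lambda>u. CdS f t S u) differentiable (at s) \<and>
       (\<lambda>u. CdSig f t u s) differentiable (at S) \<and> (\<lambda>u. CdSig f t S u) differentiable (at s)) \<and>
    (\<forall>g\<in>{f, Cdt f, CdS f, CdSig f, CdS (CdS f), CdSig (CdS f), CdS (CdSig f), CdSig (CdSig f)}.
       continuous_on U (\<lambda>(t,S,s). g t S s))"

definition C12212_on :: "(real \<times> real4) set \<Rightarrow> (real \<Rightarrow> real4 \<Rightarrow> real) \<Rightarrow> bool" where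
  "C12212_on U f \<longleftrightarrow>
    (\<forall>(t,x)\<in>U.
       (\<lambda>u. f u x) differentiable (at t) \<and>
       (\<forall>i\<in>{1,2,3,4}. (\<lambda>u. f t (upd4 i u x)) differentiable (at (comp4 i x))) \<and>
       (\<forall>i\<in>{1,2,4}. \<forall>j\<in>{1,2,4}. (\<lambda>u. Vdx i f t (upd4 j u x)) differentiable (at (comp4 j x)))) \<and>
    continuous_on U (\<lambda>(t,x). f t x) \<and> continuous_on U (\<lambda>(t,x). Vdt f t x) \<and>
    (\<forall>i\<in>{1,2,3,4}. continuous_on U (\<lambda>(t,x). Vdx i f t x)) \<and>
    (\<forall>i\<in>{1,2,4}. \<forall>j\<in>{1,2,4}. continuous_on U (\<lambda>(t,x). Vdx j (Vdx i f) t x))"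

definition C3 :: "(real \<Rightarrow> real) \<Rightarrow> bool" where
  "C3 U \<longleftrightarrow> (\<forall>y. U differentiable (at y) \<and> deriv U differentiable (at y) \<and>
                 deriv (deriv U) differentiable (at y)) \<and> continuous_on UNIV (deriv (deriv (deriv U)))"

definition D0 :: "real \<Rightarrow> (real \<times> real4) set" where
  "D0 T = {(t,x). 0 < t \<and> t < T \<and> xS x > 0 \<and> xM x > 0 \<and> xSig x > 0}"

definition D :: "real \<Rightarrow> real \<Rightarrow> real \<Rightarrow> (real \<times> real4) set" where
  "D T Slo Shi = {(t,x). 0 < t \<and> t < T \<and> xS x > 0 \<and> xM x > 0 \<and> Slo \<le> xSig x \<and> xSig x \<le> Shi}"

definition D0cl :: "real \<Rightarrow> (real \<times> real4) set" where
  "D0cl T = {(t,x). 0 \<le> t \<and> t \<le> T \<and> xS x \<ge> 0 \<and> xM x \<ge> 0 \<and> xSig x \<ge> 0}"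

(* A path \<omega> = (\<omega>^S, \<omega>^\<Sigma>, \<omega>^A) on [0,T], extended constantly outside [0,T]. *)
type_synonym path = "real \<Rightarrow> real \<times> real \<times> real"

definition Omega :: "real \<Rightarrow> real \<Rightarrow> real \<Rightarrow> real \<Rightarrow> path set" where
  "Omega T S0 Sig0 A0 = {\<omega>. continuous_on {0..T} \<omega> \<and> \<omega> 0 = (S0, Sig0, A0) \<and>
                             (\<forall>u. \<omega> u = \<omega> (min T (max 0 u)))}"

definition pS :: "path \<Rightarrow> real \<Rightarrow> real" where "pS \<omega> t = fst (\<omega> t)"
definition pSig :: "path \<Rightarrow> real \<Rightarrow> real" where "pSig \<omega> t = fst (snd (\<omega> t))"
definition pA :: "path \<Rightarrow> real \<Rightarrow> real" where "pA \<omega> t = snd (snd (\<omega> t))"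
definition pM :: "path \<Rightarrow> real \<Rightarrow> real" where "pM \<omega> t = Sup ((\<lambda>u. pS \<omega> u) ` {0..t})"

definition Xp :: "path \<Rightarrow> real \<Rightarrow> real4" where
  "Xp \<omega> t = (pS \<omega> t, pA \<omega> t, pM \<omega> t, pSig \<omega> t)"

definition evalsets :: "path set \<Rightarrow> real set \<Rightarrow> path set set" where
  "evalsets \<Omega> I = {(\<lambda>\<omega>. \<omega> u) -` B \<inter> \<Omega> | u B. u \<in> I \<and> B \<in> sets borel}"

(* \<F> = Borel \<sigma>-algebra of the uniform topology = \<sigma>(coordinates); raw filtration \<F>_t. *)
definition Fsets :: "real \<Rightarrow> path set \<Rightarrow> path set set" where
  "Fsets T \<Omega> = sigma_sets \<Omega> (evalsets \<Omega> {0..T})"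
definition Ft :: "path set \<Rightarrow> real \<Rightarrow> path measure" where
  "Ft \<Omega> t = sigma \<Omega> (evalsets \<Omega> {0..t})"

definition prog_meas :: "real \<Rightarrow> path set \<Rightarrow> (real \<Rightarrow> path \<Rightarrow> 'b::topological_space) \<Rightarrow> bool" where
  "prog_meas T \<Omega> Z \<longleftrightarrow> (\<forall>t\<in>{0..T}.
      (\<lambda>(u,\<omega>). Z u \<omega>) \<in> borel_measurable (restrict_space borel {0..t} \<Otimes>\<^sub>M Ft \<Omega> t))"

definition AE_dtP :: "real \<Rightarrow> path measure \<Rightarrow> (real \<Rightarrow> path \<Rightarrow> bool) \<Rightarrow> bool" where
  "AE_dtP T P Q \<longleftrightarrow> (AE z in (restrict_space lborel {0..T} \<Otimes>\<^sub>M P). Q (fst z) (snd z))"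

definition Lp :: "real \<Rightarrow> path measure set \<Rightarrow> nat \<Rightarrow> (real \<Rightarrow> real4 \<Rightarrow> real) \<Rightarrow> bool" where
  "Lp T PP p K \<longleftrightarrow> set_borel_measurable borel (D0 T) (\<lambda>(t,x). K t x) \<and>
     (\<exists>B::real. \<forall>P\<in>PP.
        (\<integral>\<^sup>+\<omega>. (\<integral>\<^sup>+t. indicator {0..T} t * ennreal (\<bar>K t (Xp \<omega> t)\<bar> ^ p) \<partial>lborel) \<partial>P) \<le> ennreal B)"

definition zeta0 :: "real \<Rightarrow> real4" where "zeta0 s = (0, s, 0, 0)"

definition bC :: "(real \<Rightarrow> real \<Rightarrow> real \<Rightarrow> real) \<Rightarrow> real \<Rightarrow> real4 \<Rightarrow> real4 \<Rightarrow> real" where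
  "bC C t x z = (let S = xS x; s = xSig x in
      c1 z * CdSig C t S s + 1/2 * S^2 * CdS (CdS C) t S s * ((c2 z)^2 - s^2)
      + c2 z * c3 z * S * CdSig (CdS C) t S s + 1/2 * ((c3 z)^2 + c4 z) * CdSig (CdSig C) t S s)"

definition Z0 :: "(real \<Rightarrow> real \<Rightarrow> real \<Rightarrow> real) \<Rightarrow> real \<Rightarrow> real4 \<Rightarrow> real4 set" where
  "Z0 C t x = {z. c4 z \<ge> 0 \<and> bC C t x z = 0}"
definition Zbox :: "real4 \<Rightarrow> real4 \<Rightarrow> real4 set" where
  "Zbox lo hi = {z. c1 lo \<le> c1 z \<and> c1 z \<le> c1 hi \<and> c2 lo \<le> c2 z \<and> c2 z \<le> c2 hi \<and>
                    c3 lo \<le> c3 z \<and> c3 z \<le> c3 hi \<and> 0 \<le> c4 z \<and> c4 z \<le> c4 hi}"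

definition gam_at :: "(real \<Rightarrow> real \<Rightarrow> real \<Rightarrow> real \<Rightarrow> real) \<Rightarrow> real \<Rightarrow> real4 \<Rightarrow> real" where
  "gam_at g t x = g t (xS x) (xA x) (xM x)"

definition Gam :: "(real \<Rightarrow> real \<Rightarrow> real \<Rightarrow> real \<Rightarrow> real) \<Rightarrow> (real \<Rightarrow> real4 \<Rightarrow> real) \<Rightarrow> real \<Rightarrow> real4 \<Rightarrow> real" where
  "Gam \<gamma> V t x = Vdx 1 (Vdx 1 V) t x + 2 * gam_at \<gamma> t x * Vdx 2 (Vdx 1 V) t x
                 + (gam_at \<gamma> t x)^2 * Vdx 2 (Vdx 2 V) t x"
definition Del :: "(real \<Rightarrow> real \<Rightarrow> real \<Rightarrow> real \<Rightarrow> real) \<Rightarrow> (real \<Rightarrow> real4 \<Rightarrow> real) \<Rightarrow> real \<Rightarrow> real4 \<Rightarrow> real" where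
  "Del \<gamma> V t x = Vdx 1 V t x + gam_at \<gamma> t x * Vdx 2 V t x"
definition dDel_dSig :: "(real \<Rightarrow> real \<Rightarrow> real \<Rightarrow> real \<Rightarrow> real) \<Rightarrow> (real \<Rightarrow> real4 \<Rightarrow> real) \<Rightarrow> real \<Rightarrow> real4 \<Rightarrow> real" where
  "dDel_dSig \<gamma> V t x = Vdx 4 (Vdx 1 V) t x + gam_at \<gamma> t x * Vdx 4 (Vdx 2 V) t x"

definition Lop :: "(real \<Rightarrow> real \<Rightarrow> real \<Rightarrow> real \<Rightarrow> real) \<Rightarrow> (real \<Rightarrow> real \<Rightarrow> real \<Rightarrow> real \<Rightarrow> real) \<Rightarrow>
     (real \<Rightarrow> real \<Rightarrow> real \<Rightarrow> real \<Rightarrow> real) \<Rightarrow> (real \<Rightarrow> real4 \<Rightarrow> real) \<Rightarrow> real \<Rightarrow> real4 \<Rightarrow> real" where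
  "Lop \<alpha> \<beta> \<gamma> w t x = Vdt w t x + (gam_at \<alpha> t x + 1/2 * gam_at \<beta> t x * (xSig x)^2) * Vdx 2 w t x
      + 1/2 * (xSig x)^2 * (xS x)^2 * Gam \<gamma> w t x"

definition cvec :: "(real \<Rightarrow> real \<Rightarrow> real \<Rightarrow> real) \<Rightarrow> real \<Rightarrow> real4 \<Rightarrow> real4" where
  "cvec C t x = (let S = xS x; s = xSig x in
     (CdSig C t S s, s * S^2 * CdS (CdS C) t S s, s * S * CdSig (CdS C) t S s, 1/2 * CdSig (CdSig C) t S s))"

definition vvec :: "(real \<Rightarrow> real \<Rightarrow> real \<Rightarrow> real \<Rightarrow> real) \<Rightarrow> (real \<Rightarrow> real \<Rightarrow> real \<Rightarrow> real \<Rightarrow> real) \<Rightarrow>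
     (real \<Rightarrow> real4 \<Rightarrow> real) \<Rightarrow> real \<Rightarrow> real4 \<Rightarrow> real4" where
  "vvec \<beta> \<gamma> V t x = (let S = xS x; s = xSig x in
     (Vdx 4 V t x, s * (gam_at \<beta> t x * Vdx 2 V t x + S^2 * Gam \<gamma> V t x),
      s * S * dDel_dSig \<gamma> V t x, 1/2 * Vdx 4 (Vdx 4 V) t x))"

definition lam :: "real4 \<Rightarrow> (real \<Rightarrow> real \<Rightarrow> real \<Rightarrow> real) \<Rightarrow> (real \<Rightarrow> real \<Rightarrow> real \<Rightarrow> real \<Rightarrow> real) \<Rightarrow>
     (real \<Rightarrow> real \<Rightarrow> real \<Rightarrow> real \<Rightarrow> real) \<Rightarrow> (real \<Rightarrow> real4 \<Rightarrow> real) \<Rightarrow> real \<Rightarrow> real4 \<Rightarrow> real" where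
  "lam Psi C \<beta> \<gamma> V t x = (let c = cvec C t x; v = vvec \<beta> \<gamma> V t x;
       CSS = CdSig (CdSig C) t (xS x) (xSig x); VSS = Vdx 4 (Vdx 4 V) t x;
       l0 = wdot Psi c v / wdot Psi c c in
     if VSS - l0 * CSS \<ge> 0 then l0
     else (wdot Psi c v - 1/4 * CSS * VSS * c4 Psi) / (wdot Psi c c - 1/4 * CSS^2 * c4 Psi))"

definition mu :: "real4 \<Rightarrow> (real \<Rightarrow> real \<Rightarrow> real \<Rightarrow> real) \<Rightarrow> (real \<Rightarrow> real \<Rightarrow> real \<Rightarrow> real \<Rightarrow> real) \<Rightarrow>
     (real \<Rightarrow> real \<Rightarrow> real \<Rightarrow> real \<Rightarrow> real) \<Rightarrow> (real \<Rightarrow> real4 \<Rightarrow> real) \<Rightarrow> real \<Rightarrow> real4 \<Rightarrow> real" where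
  "mu Psi C \<beta> \<gamma> V t x = 1/2 * negpart (Vdx 4 (Vdx 4 V) t x
       - lam Psi C \<beta> \<gamma> V t x * CdSig (CdSig C) t (xS x) (xSig x))"

definition ztil :: "real4 \<Rightarrow> (real \<Rightarrow> real \<Rightarrow> real \<Rightarrow> real) \<Rightarrow> (real \<Rightarrow> real \<Rightarrow> real \<Rightarrow> real \<Rightarrow> real) \<Rightarrow>
     (real \<Rightarrow> real \<Rightarrow> real \<Rightarrow> real \<Rightarrow> real) \<Rightarrow> (real \<Rightarrow> real4 \<Rightarrow> real) \<Rightarrow> real \<Rightarrow> real4 \<Rightarrow> real4" where
  "ztil Psi C \<beta> \<gamma> V t x = (let c = cvec C t x; v = vvec \<beta> \<gamma> V t x;
       l = lam Psi C \<beta> \<gamma> V t x; m = mu Psi C \<beta> \<gamma> V t x in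
     (c1 Psi * (c1 v - l * c1 c), c2 Psi * (c2 v - l * c2 c),
      c3 Psi * (c3 v - l * c3 c), c4 Psi * (c4 v - l * c4 c + m)))"

definition zpsi :: "real \<Rightarrow> real \<Rightarrow> real4 \<Rightarrow> (real \<Rightarrow> real \<Rightarrow> real \<Rightarrow> real) \<Rightarrow> (real \<Rightarrow> real \<Rightarrow> real \<Rightarrow> real \<Rightarrow> real) \<Rightarrow>
     (real \<Rightarrow> real \<Rightarrow> real \<Rightarrow> real \<Rightarrow> real) \<Rightarrow> (real \<Rightarrow> real4 \<Rightarrow> real) \<Rightarrow> real \<Rightarrow> real \<Rightarrow> real4 \<Rightarrow> real4" where
  "zpsi Slo Shi Psi C \<beta> \<gamma> V \<psi> t x = zeta0 (xSig x) +
     (if Slo < xSig x \<and> xSig x < Shi then \<psi> *\<^sub>R ztil Psi C \<beta> \<gamma> V t x else 0)"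

definition gtil :: "real4 \<Rightarrow> (real \<Rightarrow> real \<Rightarrow> real \<Rightarrow> real) \<Rightarrow> (real \<Rightarrow> real \<Rightarrow> real \<Rightarrow> real \<Rightarrow> real) \<Rightarrow>
     (real \<Rightarrow> real \<Rightarrow> real \<Rightarrow> real \<Rightarrow> real) \<Rightarrow> (real \<Rightarrow> real4 \<Rightarrow> real) \<Rightarrow> real \<Rightarrow> real4 \<Rightarrow> real" where
  "gtil Psi C \<beta> \<gamma> V t x = dot4 (vvec \<beta> \<gamma> V t x) (ztil Psi C \<beta> \<gamma> V t x)"

definition H1 :: "real4 \<Rightarrow> (real \<Rightarrow> real \<Rightarrow> real \<Rightarrow> real \<Rightarrow> real) \<Rightarrow> (real \<Rightarrow> real \<Rightarrow> real \<Rightarrow> real \<Rightarrow> real) \<Rightarrow>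
     (real \<Rightarrow> real4 \<Rightarrow> real) \<Rightarrow> real \<Rightarrow> real \<Rightarrow> real4 \<Rightarrow> real4 \<Rightarrow> real" where
  "H1 Psi \<beta> \<gamma> V \<psi> t x z = (let d = z - zeta0 (xSig x) in
     1 / (2 * \<psi>) * wdot (inv4 Psi) d d - dot4 (vvec \<beta> \<gamma> V t x) d)"

definition ups_star :: "(real \<Rightarrow> real \<Rightarrow> real \<Rightarrow> real) \<Rightarrow> (real \<Rightarrow> real \<Rightarrow> real \<Rightarrow> real \<Rightarrow> real) \<Rightarrow>
     (real \<Rightarrow> real4 \<Rightarrow> real) \<Rightarrow> real \<Rightarrow> real4 \<Rightarrow> real \<times> real" where
  "ups_star C \<gamma> V t x = (let r = Vdx 4 V t x / CdSig C t (xS x) (xSig x) in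
     (Del \<gamma> V t x - r * CdS C t (xS x) (xSig x), r))"

end

theory Submission
  imports Defs
begin

lemma nn_integral_add_le_meas:
  assumes f: "f \<in> borel_measurable M"
  shows "(\<integral>\<^sup>+x. f x + g x \<partial>M) \<le> integral\<^sup>N M f + integral\<^sup>N M g"
proof -
  have "simple_integral M s \<le> integral\<^sup>N M f + integral\<^sup>N M g"
    if s: "simple_function M s" "s \<le> (\<lambda>x. f x + g x)" for s
  proof -
    define h where "h x = (if f x = top then 0 else s x - f x)" for x
    have sm: "s \<in> borel_measurable M" using s(1) by (rule borel_measurable_simple_function)
    have hm: "h \<in> borel_measurable M" unfolding h_def using sm f by measurable
    have le1: "s x \<le> f x + h x" for x
    proof (cases "f x = top")
      case True then show ?thesis by (simp add: h_def)
    next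
      case False
      show ?thesis
      proof (cases "f x \<le> s x")
        case True then show ?thesis using False by (simp add: h_def add_diff_inverse_ennreal)
      next
        case F2: False
        then have "s x \<le> f x" by simp
        also have "f x \<le> f x + h x" by simp
        finally show ?thesis .
      qed
    qed
    have le2: "h x \<le> g x" for x
    proof (cases "f x = top")
      case True then show ?thesis by (simp add: h_def)
    next
      case False
      have "s x \<le> f x + g x" using s(2) by (simp add: le_fun_def)
      then show ?thesis using False by (simp add: h_def ennreal_minus_le_iff)
    qed
    have "simple_integral M s = integral\<^sup>N M s" using nn_integral_eq_simple_integral[OF s(1)] by simp
    also have "\<dots> \<le> (\<integral>\<^sup>+x. f x + h x \<partial>M)" by (intro nn_integral_mono le1)
    also have "\<dots> = integral\<^sup>N M f + (\<integral>\<^sup>+x. h x \<partial>M)" using f hm by (rule nn_integral_add)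
    also have "\<dots> \<le> integral\<^sup>N M f + integral\<^sup>N M g" by (intro add_left_mono nn_integral_mono le2)
    finally show ?thesis .
  qed
  then show ?thesis unfolding nn_integral_def[of M "\<lambda>x. f x + g x"] by (intro SUP_least) auto
qed

lemma nn_integral_cmult_le:
  fixes c :: ennreal
  assumes c: "c < top"
  shows "(\<integral>\<^sup>+x. c * g x \<partial>M) \<le> c * integral\<^sup>N M g"
proof (cases "c = 0")
  case True then show ?thesis by simp
next
  case False
  have "simple_integral M s \<le> c * integral\<^sup>N M g"
    if s: "simple_function M s" "s \<le> (\<lambda>x. c * g x)" for s
  proof -
    have sm: "s \<in> borel_measurable M" using s(1) by (rule borel_measurable_simple_function)
    have hm: "(\<lambda>x. s x / c) \<in> borel_measurable M" using sm by measurable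
    have ct: "c \<noteq> top" using c by simp
    have eq: "s x = c * (s x / c)" for x
      using False ct by (metis ennreal_times_divide mult.commute mult_divide_eq_ennreal)
    have le2: "s x / c \<le> g x" for x
      using s(2) False by (intro divide_le_posI_ennreal) (auto simp: le_fun_def zero_less_iff_neq_zero)  
    have "simple_integral M s = integral\<^sup>N M s" using nn_integral_eq_simple_integral[OF s(1)] by simp
    also have "\<dots> = (\<integral>\<^sup>+x. c * (s x / c) \<partial>M)" by (intro nn_integral_cong) (rule eq)
    also have "\<dots> = c * (\<integral>\<^sup>+x. s x / c \<partial>M)" using hm by (rule nn_integral_cmult)
    also have "\<dots> \<le> c * integral\<^sup>N M g" by (intro mult_left_mono nn_integral_mono le2) auto
    finally show ?thesis .
  qed
  then show ?thesis unfolding nn_integral_def[of M "\<lambda>x. c * g x"] by (intro SUP_least) auto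
qed

lemma Lp_transfer:
  assumes PP: "\<forall>P\<in>PP. prob_space P"
    and meas: "set_borel_measurable borel (D0 T) (\<lambda>(t,x). F t x)"
    and G: "Lp T PP q G"
    and bnd: "\<And>t x. \<bar>F t x\<bar>^p \<le> \<alpha> + \<beta> * \<bar>G t x\<bar>^q"
    and al: "\<alpha> \<ge> 0" and be: "\<beta> \<ge> 0" and T: "T \<ge> 0"
  shows "Lp T PP p F"
proof -
  from G obtain B where B: "\<forall>P\<in>PP. (\<integral>\<^sup>+\<omega>. (\<integral>\<^sup>+t. indicator {0..T} t * ennreal (\<bar>G t (Xp \<omega> t)\<bar> ^ q) \<partial>lborel) \<partial>P) \<le> ennreal B"
    using G[unfolded Lp_def, THEN conjunct2] by (elim exE)
  have main: "(\<integral>\<^sup>+\<omega>. (\<integral>\<^sup>+t. indicator {0..T} t * ennreal (\<bar>F t (Xp \<omega> t)\<bar> ^ p) \<partial>lborel) \<partial>P)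
          \<le> ennreal (\<alpha>*T + \<beta>*max B 0)" if P: "P \<in> PP" for P
  proof -
    interpret prob_space P using PP P by auto
    define I where "I \<omega> = (\<integral>\<^sup>+t. indicator {0..T} t * ennreal (\<bar>G t (Xp \<omega> t)\<bar> ^ q) \<partial>lborel)" for \<omega>
    have cst: "(\<integral>\<^sup>+t. indicator {0..T} t * ennreal \<alpha> \<partial>lborel) = ennreal (\<alpha>*T)"
    proof -
      have "(\<integral>\<^sup>+t. indicator {0..T} t * ennreal \<alpha> \<partial>lborel) = (\<integral>\<^sup>+t. ennreal \<alpha> * indicator {0..T} t \<partial>lborel)"
        by (simp add: mult.commute)
      also have "\<dots> = ennreal \<alpha> * emeasure lborel {0..T}" by (rule nn_integral_cmult_indicator) simp
      also have "\<dots> = ennreal (\<alpha>*T)" using T al by (simp add: ennreal_mult)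
      finally show ?thesis .
    qed
    have inner: "(\<integral>\<^sup>+t. indicator {0..T} t * ennreal (\<bar>F t (Xp \<omega> t)\<bar> ^ p) \<partial>lborel)
                  \<le> ennreal (\<alpha>*T) + ennreal \<beta> * I \<omega>" for \<omega>
    proof -
      have "(\<integral>\<^sup>+t. indicator {0..T} t * ennreal (\<bar>F t (Xp \<omega> t)\<bar> ^ p) \<partial>lborel)
         \<le> (\<integral>\<^sup>+t. indicator {0..T} t * ennreal \<alpha> + ennreal \<beta> * (indicator {0..T} t * ennreal (\<bar>G t (Xp \<omega> t)\<bar> ^ q)) \<partial>lborel)"
      proof (rule nn_integral_mono)
        fix t
        have "ennreal (\<bar>F t (Xp \<omega> t)\<bar> ^ p) \<le> ennreal (\<alpha> + \<beta> * \<bar>G t (Xp \<omega> t)\<bar> ^ q)"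
          using bnd by (rule ennreal_leI)
        also have "\<dots> = ennreal \<alpha> + ennreal \<beta> * ennreal (\<bar>G t (Xp \<omega> t)\<bar> ^ q)"
          using al be by (simp add: ennreal_plus ennreal_mult)
        finally show "indicator {0..T} t * ennreal (\<bar>F t (Xp \<omega> t)\<bar> ^ p)
          \<le> indicator {0..T} t * ennreal \<alpha> + ennreal \<beta> * (indicator {0..T} t * ennreal (\<bar>G t (Xp \<omega> t)\<bar> ^ q))"
          by (cases "t \<in> {0..T}") auto
      qed
      also have "\<dots> \<le> (\<integral>\<^sup>+t. indicator {0..T} t * ennreal \<alpha> \<partial>lborel)
           + (\<integral>\<^sup>+t. ennreal \<beta> * (indicator {0..T} t * ennreal (\<bar>G t (Xp \<omega> t)\<bar> ^ q)) \<partial>lborel)"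
        by (rule nn_integral_add_le_meas) simp
      also have "\<dots> \<le> ennreal (\<alpha>*T) + ennreal \<beta> * I \<omega>"
        unfolding cst I_def by (intro add_left_mono nn_integral_cmult_le) simp
      finally show ?thesis .
    qed
    have "(\<integral>\<^sup>+\<omega>. (\<integral>\<^sup>+t. indicator {0..T} t * ennreal (\<bar>F t (Xp \<omega> t)\<bar> ^ p) \<partial>lborel) \<partial>P)
        \<le> (\<integral>\<^sup>+\<omega>. ennreal (\<alpha>*T) + ennreal \<beta> * I \<omega> \<partial>P)"
      by (intro nn_integral_mono inner)
    also have "\<dots> \<le> (\<integral>\<^sup>+\<omega>. ennreal (\<alpha>*T) \<partial>P) + (\<integral>\<^sup>+\<omega>. ennreal \<beta> * I \<omega> \<partial>P)"
      by (rule nn_integral_add_le_meas) simp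
    also have "\<dots> \<le> ennreal (\<alpha>*T) + ennreal \<beta> * (\<integral>\<^sup>+\<omega>. I \<omega> \<partial>P)"
    proof (intro add_mono nn_integral_cmult_le)
      show "(\<integral>\<^sup>+\<omega>. ennreal (\<alpha>*T) \<partial>P) \<le> ennreal (\<alpha>*T)"
        by (simp add: nn_integral_const emeasure_space_1)
    qed simp_all
    also have "\<dots> \<le> ennreal (\<alpha>*T) + ennreal \<beta> * ennreal (max B 0)"
    proof -
      have "(\<integral>\<^sup>+\<omega>. I \<omega> \<partial>P) \<le> ennreal B" unfolding I_def by (rule bspec[OF B P])
      also have "\<dots> \<le> ennreal (max B 0)" by (intro ennreal_leI) simp
      finally show ?thesis by (intro add_left_mono mult_left_mono) auto
    qed
    also have "\<dots> = ennreal (\<alpha>*T + \<beta>*max B 0)"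
      using al be T by (simp add: ennreal_plus ennreal_mult)
    finally show ?thesis .
  qed
  show ?thesis unfolding Lp_def
    by (rule conjI[OF meas], rule exI[of _ "\<alpha>*T + \<beta>*max B 0"], intro ballI main)
qed


lemma orth_alg:
  fixes P1 P2 P3 P4 a1 a2 a3 a4 b1 b2 b3 b4 CSS VSS l m :: real
  assumes P: "P1 > 0" "P2 > 0" "P3 > 0" "P4 > 0" and a1: "a1 \<noteq> 0"
    and a4: "a4 = 1/2 * CSS" and b4: "b4 = 1/2 * VSS"
    and l: "l = (let l0 = (P1*a1*b1 + P2*a2*b2 + P3*a3*b3 + P4*a4*b4) / (P1*a1*a1 + P2*a2*a2 + P3*a3*a3 + P4*a4*a4) in
       if VSS - l0 * CSS \<ge> 0 then l0
       else ((P1*a1*b1 + P2*a2*b2 + P3*a3*b3 + P4*a4*b4) - 1/4 * CSS * VSS * P4) /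
            ((P1*a1*a1 + P2*a2*a2 + P3*a3*a3 + P4*a4*a4) - 1/4 * CSS^2 * P4))"
    and m: "m = 1/2 * negpart (VSS - l * CSS)"
  shows "P1*(-l*a1)*(b1 - l*a1) + P2*(-l*a2)*(b2 - l*a2) + P3*(-l*a3)*(b3 - l*a3)
          + P4*(-l*a4 + m)*(b4 - l*a4 + m) = 0" and "m \<ge> 0"
proof -
  define A where "A = P1*a1*b1 + P2*a2*b2 + P3*a3*b3 + P4*a4*b4"
  define B where "B = P1*a1*a1 + P2*a2*a2 + P3*a3*a3 + P4*a4*a4"
  define D' where "D' = P1*a1*a1 + P2*a2*a2 + P3*a3*a3"
  have "a1*a1 > 0" using a1 by (metis not_real_square_gt_zero)
  then have p1: "P1*a1*a1 > 0" using P(1) by (simp add: mult.assoc)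
  have q2: "P2*a2*a2 \<ge> 0" using P(2) by (simp add: mult.assoc)
  have q3: "P3*a3*a3 \<ge> 0" using P(3) by (simp add: mult.assoc)
  have q4: "P4*a4*a4 \<ge> 0" using P(4) by (simp add: mult.assoc)
  have D'pos: "D' > 0" unfolding D'_def using p1 q2 q3 by linarith
  have Bpos: "B > 0" unfolding B_def using p1 q2 q3 q4 by linarith
  have BD: "B - P4*a4*a4 = D'" unfolding B_def D'_def by simp
  show "m \<ge> 0" using m by (simp add: negpart_def)
  show "P1*(-l*a1)*(b1 - l*a1) + P2*(-l*a2)*(b2 - l*a2) + P3*(-l*a3)*(b3 - l*a3)
          + P4*(-l*a4 + m)*(b4 - l*a4 + m) = 0"
  proof (cases "VSS - (A/B) * CSS \<ge> 0")
    case True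
    then have ll: "l = A/B" using l unfolding A_def B_def Let_def by simp
    have "VSS - l*CSS \<ge> 0" using True ll by simp
    then have m0: "m = 0" using m by (simp add: negpart_def)
    have "P1*(-l*a1)*(b1 - l*a1) + P2*(-l*a2)*(b2 - l*a2) + P3*(-l*a3)*(b3 - l*a3)
          + P4*(-l*a4)*(b4 - l*a4) = - l * (A - l * B)"
      unfolding A_def B_def by (simp add: algebra_simps)
    also have "A - l*B = 0" using ll Bpos by simp
    finally show ?thesis using m0 by simp
  next
    case False
    then have ll: "l = (A - P4*a4*b4) / D'" using l a4 b4 BD unfolding A_def B_def Let_def
      by (simp add: power2_eq_square algebra_simps)
    have lD: "l*D' = A - P4*a4*b4" using ll D'pos by simp
    have "b4 - l*a4 = (b4*D' - a4*(l*D'))/D'" using D'pos by (simp add: field_simps)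
    also have "\<dots> = (b4*D' - a4*(A - P4*a4*b4))/D'" by (simp only: lD)
    also have "\<dots> = (b4*B - a4*A)/D'" using BD by (simp add: algebra_simps)
    also have "\<dots> = B * (b4 - (A/B)*a4) / D'" using Bpos D'pos by (simp add: field_simps)
    finally have "b4 - l*a4 = B * (b4 - (A/B)*a4) / D'" .
    moreover have "b4 - (A/B)*a4 < 0"
    proof -
      have "VSS - (A/B)*CSS < 0" using False by simp
      moreover have "VSS - (A/B)*CSS = 2*(b4 - (A/B)*a4)" using a4 b4 by (simp add: algebra_simps)
      ultimately have "2*(b4 - (A/B)*a4) < 0" by simp
      then show ?thesis by simp
    qed
    ultimately have neg: "b4 - l*a4 < 0" using Bpos D'pos
      by (simp add: divide_neg_pos mult_pos_neg)
    have lc: "l*CSS = 2*(l*a4)" using a4 by simp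
    have e2: "VSS - l*CSS = 2*(b4 - l*a4)" using a4 b4 by (simp add: algebra_simps)
    have "VSS - l*CSS < 0" unfolding e2 using neg by simp
    then have "m = 1/2 * (l*CSS - VSS)" using m by (simp add: negpart_def)
    then have mm: "m = l*a4 - b4" using e2 by (simp add: field_simps)
    have "P1*(-l*a1)*(b1 - l*a1) + P2*(-l*a2)*(b2 - l*a2) + P3*(-l*a3)*(b3 - l*a3)
          = - l * ((A - P4*a4*b4) - l * D')"
      unfolding A_def D'_def by (simp add: algebra_simps)
    also have "(A - P4*a4*b4) - l * D' = 0" using ll D'pos by simp
    finally show ?thesis using mm by simp
  qed
qed

lemma sq_bound:
  fixes P1 P2 P3 P4 u1 u2 u3 u4 w1 w2 w3 w4 :: real
  assumes P: "P1 > 0" "P2 > 0" "P3 > 0" "P4 > 0"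
    and o: "P1*u1*(w1+u1) + P2*u2*(w2+u2) + P3*u3*(w3+u3) + P4*u4*(w4+u4) = 0"
  shows "P1*u1^2 + P2*u2^2 + P3*u3^2 + P4*u4^2 \<le> P1*w1^2 + P2*w2^2 + P3*w3^2 + P4*w4^2"
proof -
  have "P1*w1^2 + P2*w2^2 + P3*w3^2 + P4*w4^2 - (P1*u1^2 + P2*u2^2 + P3*u3^2 + P4*u4^2)
     = P1*(w1+u1)^2 + P2*(w2+u2)^2 + P3*(w3+u3)^2 + P4*(w4+u4)^2
       - 2*(P1*u1*(w1+u1) + P2*u2*(w2+u2) + P3*u3*(w3+u3) + P4*u4*(w4+u4))"
    by (simp add: power2_eq_square algebra_simps)
  also have "\<dots> \<ge> 0" using o P by (simp add: add_nonneg_nonneg)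
  finally show ?thesis by simp
qed

lemma abs_le_from_sq:
  fixes P u B :: real
  assumes "P > 0" "P*u^2 \<le> B"
  shows "\<bar>u\<bar> \<le> 1 + B/P"
proof -
  have "u^2 \<le> B/P" using assms by (simp add: field_simps mult.commute)
  moreover have "\<bar>u\<bar> \<le> 1 + u^2"
  proof -
    have "0 \<le> (\<bar>u\<bar> - 1)*(\<bar>u\<bar> - 1)" by simp
    moreover have "\<bar>u\<bar>*\<bar>u\<bar> = u^2" by (simp add: power2_eq_square)
    ultimately have "0 \<le> u^2 - 2*\<bar>u\<bar> + 1" by (simp add: algebra_simps)
    moreover have "u^2 \<ge> 0" by simp
    ultimately show ?thesis by linarith
  qed
  ultimately show ?thesis by simp
qed

lemma comp_sq:
  fixes P d r \<psi> :: real
  assumes "P > 0" "\<psi> > 0"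
  shows "1/(2*\<psi>) * ((1/P)*d*d) \<ge> r*d - \<psi>/2 * (P*r*r)"
proof -
  have "0 \<le> (d - \<psi>*P*r)^2 / (2*\<psi>*P)" using assms by simp
  also have "(d - \<psi>*P*r)^2 / (2*\<psi>*P) = 1/(2*\<psi>) * ((1/P)*d*d) - (r*d - \<psi>/2 * (P*r*r))"
    using assms by (simp add: field_simps power2_eq_square)
  finally show ?thesis by simp
qed

lemma part_a_sq:
  fixes P1 P2 P3 P4 b1 b2 b3 b4 u1 u2 u3 u4 d1 d2 d3 d4 \<psi> :: real
  assumes P: "P1 > 0" "P2 > 0" "P3 > 0" "P4 > 0" and ps: "\<psi> > 0"
    and o: "P1*u1*(b1+u1) + P2*u2*(b2+u2) + P3*u3*(b3+u3) + P4*u4*(b4+u4) = 0"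
  shows "1/(2*\<psi>) * ((1/P1)*d1*d1 + (1/P2)*d2*d2 + (1/P3)*d3*d3 + (1/P4)*d4*d4)
           - (b1*d1 + b2*d2 + b3*d3 + b4*d4)
         \<ge> - 1/2 * (b1*(P1*(b1+u1)) + b2*(P2*(b2+u2)) + b3*(P3*(b3+u3)) + b4*(P4*(b4+u4))) * \<psi>
           + (u1*d1 + u2*d2 + u3*d3 + u4*d4)"
proof -
  note c1 = comp_sq[OF P(1) ps, where d=d1 and r="b1+u1"]
  note c2 = comp_sq[OF P(2) ps, where d=d2 and r="b2+u2"]
  note c3 = comp_sq[OF P(3) ps, where d=d3 and r="b3+u3"]
  note c4 = comp_sq[OF P(4) ps, where d=d4 and r="b4+u4"]
  define L where "L = 1/(2*\<psi>) * ((1/P1)*d1*d1 + (1/P2)*d2*d2 + (1/P3)*d3*d3 + (1/P4)*d4*d4)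
           - (b1*d1 + b2*d2 + b3*d3 + b4*d4)"
  define Rr where "Rr = - 1/2 * (b1*(P1*(b1+u1)) + b2*(P2*(b2+u2)) + b3*(P3*(b3+u3)) + b4*(P4*(b4+u4))) * \<psi>
           + (u1*d1 + u2*d2 + u3*d3 + u4*d4)"
  have key: "L - Rr = (1/(2*\<psi>) * ((1/P1)*d1*d1) - ((b1+u1)*d1 - \<psi>/2 * (P1*(b1+u1)*(b1+u1))))
     + (1/(2*\<psi>) * ((1/P2)*d2*d2) - ((b2+u2)*d2 - \<psi>/2 * (P2*(b2+u2)*(b2+u2))))
     + (1/(2*\<psi>) * ((1/P3)*d3*d3) - ((b3+u3)*d3 - \<psi>/2 * (P3*(b3+u3)*(b3+u3))))
     + (1/(2*\<psi>) * ((1/P4)*d4*d4) - ((b4+u4)*d4 - \<psi>/2 * (P4*(b4+u4)*(b4+u4))))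
     - \<psi>/2 * (P1*u1*(b1+u1) + P2*u2*(b2+u2) + P3*u3*(b3+u3) + P4*u4*(b4+u4))"
    unfolding L_def Rr_def by (simp add: algebra_simps)
  have "L - Rr \<ge> 0" unfolding key using c1 c2 c3 c4 o by simp
  then show ?thesis unfolding L_def Rr_def by simp
qed

lemma part_a_lin:
  fixes l m CS CSS CSSig CSigSig s S z1 z2 z3 z4 R Slo N :: real
  assumes bC: "z1*CS + 1/2*S^2*CSS*(z2^2 - s^2) + z2*z3*S*CSSig + 1/2*(z3^2+z4)*CSigSig = 0"
    and s: "Slo \<le> s" "0 < Slo"
    and A2: "\<bar>l*(s*S^2*CSS)\<bar> \<le> R" and A3: "\<bar>l*(s*S*CSSig)\<bar> \<le> R"
    and A4: "\<bar>-l*(1/2*CSigSig) + m\<bar> \<le> R" and m: "m \<ge> 0" and z4: "z4 \<ge> 0"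
    and e2: "\<bar>z2 - s\<bar> \<le> N" and e3: "\<bar>z3\<bar> \<le> N"
  shows "(-l*CS)*z1 + (-l*(s*S^2*CSS))*(z2 - s) + (-l*(s*S*CSSig))*z3 + (-l*(1/2*CSigSig)+m)*z4
          \<ge> -(2*R/Slo + R)*N^2"
proof -
  define e where "e = z2 - s"
  have sp: "s > 0" using s by simp
  have R0: "R \<ge> 0" using A2 by simp
  have eq: "(-l*CS)*z1 + (-l*(s*S^2*CSS))*(z2 - s) + (-l*(s*S*CSSig))*z3 + (-l*(1/2*CSigSig)+m)*z4
      - (l*(1/2*(S^2*CSS)*e^2) + (l*(S*CSSig))*(e*z3) + (l*(1/2*CSigSig))*z3^2 + m*z4)
      = -l * (z1*CS + 1/2*S^2*CSS*(z2^2 - s^2) + z2*z3*S*CSSig + 1/2*(z3^2+z4)*CSigSig)"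
    unfolding e_def power2_eq_square by algebra
  have h1: "\<bar>l*(S^2*CSS)\<bar> \<le> R/Slo"
  proof -
    have "\<bar>l*(S^2*CSS)\<bar> = \<bar>l*(s*S^2*CSS)\<bar> / s" using sp by (simp add: abs_mult field_simps)
    also have "\<dots> \<le> R / s" using A2 sp by (simp add: divide_right_mono)
    also have "\<dots> \<le> R / Slo" using R0 s by (simp add: divide_left_mono)
    finally show ?thesis .
  qed
  have h2: "\<bar>l*(S*CSSig)\<bar> \<le> R/Slo"
  proof -
    have "\<bar>l*(S*CSSig)\<bar> = \<bar>l*(s*S*CSSig)\<bar> / s" using sp by (simp add: abs_mult field_simps)
    also have "\<dots> \<le> R / s" using A3 sp by (simp add: divide_right_mono)
    also have "\<dots> \<le> R / Slo" using R0 s by (simp add: divide_left_mono)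
    finally show ?thesis .
  qed
  have h3: "l*(1/2*CSigSig) \<ge> -R" using A4 m by linarith
  have N0: "N \<ge> 0" using e3 by linarith
  have "\<bar>e\<bar>^2 \<le> N^2" using e2 unfolding e_def by (intro power_mono) auto
  then have q1: "e^2 \<le> N^2" by simp
  have q2: "\<bar>e*z3\<bar> \<le> N^2" using e2 e3 unfolding e_def
    by (simp add: abs_mult power2_eq_square mult_mono' )
  have "\<bar>z3\<bar>^2 \<le> N^2" using e3 by (intro power_mono) auto
  then have q3: "z3^2 \<le> N^2" by simp
  have RS: "R/Slo \<ge> 0" using R0 s by simp
  have t1: "l*(1/2*(S^2*CSS)*e^2) \<ge> -(R/Slo)*N^2"
  proof -
    have "\<bar>l*(S^2*CSS)*e^2\<bar> = \<bar>l*(S^2*CSS)\<bar> * e^2" by (simp add: abs_mult)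
    also have "\<dots> \<le> R/Slo * N^2" by (rule mult_mono[OF h1 q1 RS]) simp?
    finally have "\<bar>l*(S^2*CSS)*e^2\<bar> \<le> R/Slo * N^2" .
    then show ?thesis using RS N0 by (simp add: algebra_simps abs_le_iff)
  qed
  have t2: "(l*(S*CSSig))*(e*z3) \<ge> -(R/Slo)*N^2"
  proof -
    have "\<bar>(l*(S*CSSig))*(e*z3)\<bar> = \<bar>l*(S*CSSig)\<bar> * \<bar>e*z3\<bar>" by (rule abs_mult)
    also have "\<dots> \<le> R/Slo * N^2" by (rule mult_mono[OF h2 q2 RS]) simp
    finally have "\<bar>(l*(S*CSSig))*(e*z3)\<bar> \<le> R/Slo * N^2" .
    then show ?thesis by (simp add: abs_le_iff)
  qed
  have t3: "(l*(1/2*CSigSig))*z3^2 \<ge> -R*N^2"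
  proof -
    have "(l*(1/2*CSigSig))*z3^2 \<ge> -R*z3^2" by (rule mult_right_mono[OF h3]) simp
    moreover have "-R*z3^2 \<ge> -R*N^2" using q3 R0 by (simp add: mult_left_mono)
    ultimately show ?thesis by linarith
  qed
  have t4: "m*z4 \<ge> 0" using m z4 by simp
  have "-(2*R/Slo + R)*N^2 = -(R/Slo)*N^2 + -(R/Slo)*N^2 + -R*N^2" by (simp add: algebra_simps)
  moreover have "-l * (z1*CS + 1/2*S^2*CSS*(z2^2 - s^2) + z2*z3*S*CSSig + 1/2*(z3^2+z4)*CSigSig) = 0"
    using bC by simp
  ultimately show ?thesis using eq t1 t2 t3 t4 by linarith
qed

lemma comp_id:
  fixes P r e b \<psi> :: real
  assumes "P > 0" "\<psi> > 0"
  shows "1/(2*\<psi>)*((1/P)*(\<psi>*(P*r)+e)*(\<psi>*(P*r)+e)) - b*(\<psi>*(P*r)+e)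
     = \<psi>/2*(P*r*r - 2*b*(P*r)) + (r-b)*e + 1/(2*\<psi>)*((1/P)*e*e)"
  using assms by (simp add: field_simps power2_eq_square)

lemma esq_bound:
  fixes P e E \<psi> :: real
  assumes "P > 0" "\<psi> > 0" "\<bar>e\<bar> \<le> E"
  shows "1/(2*\<psi>)*((1/P)*e*e) \<le> 1/(2*P) * E^2 / \<psi>"
proof -
  have "\<bar>e\<bar>^2 \<le> E^2" using assms(3) by (intro power_mono) auto
  then have "e*e \<le> E^2" by (simp add: power2_eq_square)
  then have "(1/P)*e*e \<le> (1/P)*E^2" using assms(1) by (simp add: mult.assoc mult_left_mono divide_right_mono)
  then have "1/(2*\<psi>)*((1/P)*e*e) \<le> 1/(2*\<psi>)*((1/P)*E^2)" by (rule mult_left_mono) (use assms(2) in auto)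
  also have "\<dots> = 1/(2*P) * E^2 / \<psi>" by (simp add: field_simps)
  finally show ?thesis .
qed

lemma ue_bound:
  fixes u e R E :: real
  assumes "\<bar>u\<bar> \<le> R" "\<bar>e\<bar> \<le> E"
  shows "u*e \<le> R*E"
proof -
  have "u*e \<le> \<bar>u\<bar>*\<bar>e\<bar>" by (simp add: abs_mult[symmetric])
  also have "\<dots> \<le> R*E" using assms by (simp add: mult_mono')
  finally show ?thesis .
qed

lemma part_b_tail:
  fixes E Kb \<psi> R Q :: real
  assumes "0 \<le> E" "E \<le> Kb*\<psi>^2" "0 < \<psi>" "\<psi> < 1" "R \<ge> 0" "Q \<ge> 0"
  shows "4*R*E + Q*E^2/\<psi> \<le> (4*R + Q)*(Kb + Kb^2)*\<psi>^2"
proof -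
  have Kb: "Kb \<ge> 0" using assms by (smt (verit) mult_nonneg_nonneg zero_le_power2 zero_less_power mult_pos_pos
      mult_neg_pos)
  have "E^2 \<le> (Kb*\<psi>^2)^2" using assms by (simp add: power_mono)
  then have "E^2/\<psi> \<le> Kb^2*\<psi>^3" using assms by (simp add: field_simps power2_eq_square power3_eq_cube)
  also have "\<dots> \<le> Kb^2*\<psi>^2"
  proof -
    have "\<psi>^3 \<le> \<psi>^2" using assms by (simp add: power_decreasing power3_eq_cube power2_eq_square mult_left_le_one_le)
    then show ?thesis by (simp add: mult_left_mono)
  qed
  finally have e2: "E^2/\<psi> \<le> Kb^2*\<psi>^2" .
  have "4*R*E \<le> 4*R*(Kb*\<psi>^2)" using assms by (simp add: mult_left_mono)
  moreover have "Q*(E^2/\<psi>) \<le> Q*(Kb^2*\<psi>^2)" by (rule mult_left_mono[OF e2 assms(6)])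
  moreover have "4*R*(Kb*\<psi>^2) \<le> 4*R*((Kb + Kb^2)*\<psi>^2)" using assms Kb by (simp add: mult_left_mono mult_right_mono)
  moreover have "Q*(Kb^2*\<psi>^2) \<le> Q*((Kb + Kb^2)*\<psi>^2)" using assms Kb by (simp add: mult_left_mono mult_right_mono)
  ultimately show ?thesis by (simp add: algebra_simps)
qed


lemma c_tuple[simp]: "c1 (a,b,c,d) = a" "c2 (a,b,c,d) = b" "c3 (a,b,c,d) = c" "c4 (a,b,c,d) = d"
  by (simp_all add: c1_def c2_def c3_def c4_def)

lemma c_ops[simp]:
  "c1 (z - w) = c1 z - c1 w" "c2 (z - w) = c2 z - c2 w" "c3 (z - w) = c3 z - c3 w" "c4 (z - w) = c4 z - c4 w"
  "c1 (z + w) = c1 z + c1 w" "c2 (z + w) = c2 z + c2 w" "c3 (z + w) = c3 z + c3 w" "c4 (z + w) = c4 z + c4 w"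
  "c1 (r *\<^sub>R z) = r * c1 z" "c2 (r *\<^sub>R z) = r * c2 z" "c3 (r *\<^sub>R z) = r * c3 z" "c4 (r *\<^sub>R z) = r * c4 z"
  "c1 (0::real4) = 0" "c2 (0::real4) = 0" "c3 (0::real4) = 0" "c4 (0::real4) = 0"
  by (simp_all add: c1_def c2_def c3_def c4_def)

lemma c_le_norm:
  fixes z :: real4
  shows "\<bar>c1 z\<bar> \<le> norm z" "\<bar>c2 z\<bar> \<le> norm z" "\<bar>c3 z\<bar> \<le> norm z" "\<bar>c4 z\<bar> \<le> norm z"
proof -
  have n1: "norm (fst z) \<le> norm z" using norm_fst_le[of "fst z" "snd z"] by simp
  have n2: "norm (snd z) \<le> norm z" using norm_snd_le[of "snd z" "fst z"] by simp
  have n3: "norm (fst (snd z)) \<le> norm (snd z)" using norm_fst_le[of "fst (snd z)" "snd (snd z)"] by simp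
  have n4: "norm (snd (snd z)) \<le> norm (snd z)" using norm_snd_le[of "snd (snd z)" "fst (snd z)"] by simp
  have n5: "norm (fst (snd (snd z))) \<le> norm (snd (snd z))" using norm_fst_le[of "fst (snd (snd z))" "snd (snd (snd z))"] by simp
  have n6: "norm (snd (snd (snd z))) \<le> norm (snd (snd z))" using norm_snd_le[of "snd (snd (snd z))" "fst (snd (snd z))"] by simp
  show "\<bar>c1 z\<bar> \<le> norm z" using n1 by (simp add: c1_def)
  show "\<bar>c2 z\<bar> \<le> norm z" using n2 n3 by (simp add: c2_def)
  show "\<bar>c3 z\<bar> \<le> norm z" using n2 n4 n5 by (simp add: c3_def)
  show "\<bar>c4 z\<bar> \<le> norm z" using n2 n4 n6 by (simp add: c4_def)
qed

lemma point_facts: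
  fixes Psi :: real4 and C :: "real \<Rightarrow> real \<Rightarrow> real \<Rightarrow> real" and V :: "real \<Rightarrow> real4 \<Rightarrow> real"
    and \<beta> \<gamma> :: "real \<Rightarrow> real \<Rightarrow> real \<Rightarrow> real \<Rightarrow> real" and t Shi KV R :: real and x :: real4
  assumes P: "c1 Psi > 0" "c2 Psi > 0" "c3 Psi > 0" "c4 Psi > 0"
    and CS: "CdSig C t (xS x) (xSig x) \<noteq> 0"
    and s: "0 < xSig x" "xSig x \<le> Shi"
    and KVb: "\<bar>Vdx 4 V t x\<bar> \<le> KV" "\<bar>gam_at \<beta> t x * Vdx 2 V t x + (xS x)\<^sup>2 * Gam \<gamma> V t x\<bar> \<le> KV"
      "\<bar>xS x * dDel_dSig \<gamma> V t x\<bar> \<le> KV" "\<bar>Vdx 4 (Vdx 4 V) t x\<bar> \<le> KV"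
    and R: "R = 1 + (c1 Psi + c2 Psi + c3 Psi + c4 Psi)*((1+Shi)*\<bar>KV\<bar>)^2*(1/c1 Psi + 1/c2 Psi + 1/c3 Psi + 1/c4 Psi)
              + (1+Shi)*\<bar>KV\<bar>"
  defines "a \<equiv> cvec C t x" and "b \<equiv> vvec \<beta> \<gamma> V t x" and "l \<equiv> lam Psi C \<beta> \<gamma> V t x"
    and "m \<equiv> mu Psi C \<beta> \<gamma> V t x"
  shows "c1 Psi*(-l*c1 a)*(c1 b + -l*c1 a) + c2 Psi*(-l*c2 a)*(c2 b + -l*c2 a) + c3 Psi*(-l*c3 a)*(c3 b + -l*c3 a)
          + c4 Psi*(-l*c4 a + m)*(c4 b + (-l*c4 a + m)) = 0"
    and "m \<ge> 0"
    and "\<bar>c1 b\<bar> \<le> R" "\<bar>c2 b\<bar> \<le> R" "\<bar>c3 b\<bar> \<le> R" "\<bar>c4 b\<bar> \<le> R"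
    and "\<bar>-l*c1 a\<bar> \<le> R" "\<bar>-l*c2 a\<bar> \<le> R" "\<bar>-l*c3 a\<bar> \<le> R" "\<bar>-l*c4 a + m\<bar> \<le> R"
    and "R \<ge> 1"
proof -
  define CSS where "CSS = CdSig (CdSig C) t (xS x) (xSig x)"
  define VSS where "VSS = Vdx 4 (Vdx 4 V) t x"
  have a1: "c1 a \<noteq> 0" using CS by (simp add: a_def cvec_def Let_def)
  have a4: "c4 a = 1/2 * CSS" by (simp add: a_def cvec_def Let_def CSS_def)
  have b4: "c4 b = 1/2 * VSS" by (simp add: b_def vvec_def Let_def VSS_def)
  have ll: "l = (let l0 = (c1 Psi*c1 a*c1 b + c2 Psi*c2 a*c2 b + c3 Psi*c3 a*c3 b + c4 Psi*c4 a*c4 b) /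
       (c1 Psi*c1 a*c1 a + c2 Psi*c2 a*c2 a + c3 Psi*c3 a*c3 a + c4 Psi*c4 a*c4 a) in
       if VSS - l0 * CSS \<ge> 0 then l0
       else ((c1 Psi*c1 a*c1 b + c2 Psi*c2 a*c2 b + c3 Psi*c3 a*c3 b + c4 Psi*c4 a*c4 b) - 1/4 * CSS * VSS * c4 Psi) /
            ((c1 Psi*c1 a*c1 a + c2 Psi*c2 a*c2 a + c3 Psi*c3 a*c3 a + c4 Psi*c4 a*c4 a) - 1/4 * CSS^2 * c4 Psi))"
    unfolding l_def lam_def Let_def wdot_def a_def b_def CSS_def VSS_def by (rule refl)
  have mm: "m = 1/2 * negpart (VSS - l * CSS)"
    unfolding m_def mu_def l_def VSS_def CSS_def by (rule refl)
  note O = orth_alg[OF P a1 a4 b4 ll mm]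
  show o: "c1 Psi*(-l*c1 a)*(c1 b + -l*c1 a) + c2 Psi*(-l*c2 a)*(c2 b + -l*c2 a) + c3 Psi*(-l*c3 a)*(c3 b + -l*c3 a)
          + c4 Psi*(-l*c4 a + m)*(c4 b + (-l*c4 a + m)) = 0"
    using O(1) by (simp add: algebra_simps)
  show "m \<ge> 0" by (rule O(2))
  define Vb where "Vb = (1+Shi)*\<bar>KV\<bar>"
  have Shi: "Shi > 0" using s by linarith
  have KV0: "KV \<ge> 0" using KVb(1) by linarith
  have Vb0: "Vb \<ge> 0" unfolding Vb_def using Shi by simp
  have Vb1: "\<bar>KV\<bar> \<le> Vb" unfolding Vb_def using Shi by (simp add: algebra_simps)
  have Vb2: "Shi * \<bar>KV\<bar> \<le> Vb" unfolding Vb_def using Shi by (simp add: algebra_simps)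
  have bb1: "\<bar>c1 b\<bar> \<le> Vb" using KVb(1) Vb1 by (simp add: b_def vvec_def Let_def)
  have bb2: "\<bar>c2 b\<bar> \<le> Vb"
  proof -
    have "\<bar>c2 b\<bar> = xSig x * \<bar>gam_at \<beta> t x * Vdx 2 V t x + (xS x)\<^sup>2 * Gam \<gamma> V t x\<bar>"
      using s by (simp add: b_def vvec_def Let_def abs_mult)
    also have "\<dots> \<le> Shi * \<bar>KV\<bar>" using s KVb(2) by (intro mult_mono) auto
    finally show ?thesis using Vb2 by linarith
  qed
  have bb3: "\<bar>c3 b\<bar> \<le> Vb"
  proof -
    have "\<bar>c3 b\<bar> = xSig x * \<bar>xS x * dDel_dSig \<gamma> V t x\<bar>"
      using s by (simp add: b_def vvec_def Let_def abs_mult)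
    also have "\<dots> \<le> Shi * \<bar>KV\<bar>" using s KVb(3) by (intro mult_mono) auto
    finally show ?thesis using Vb2 by linarith
  qed
  have bb4: "\<bar>c4 b\<bar> \<le> Vb" using KVb(4) Vb1 by (simp add: b_def vvec_def Let_def abs_mult)
  have sqb: "\<And>y. \<bar>y\<bar> \<le> Vb \<Longrightarrow> y^2 \<le> Vb^2"
  proof -
    fix y :: real assume "\<bar>y\<bar> \<le> Vb"
    then have "\<bar>y\<bar>^2 \<le> Vb^2" by (intro power_mono) auto
    then show "y^2 \<le> Vb^2" by simp
  qed
  define Bm where "Bm = (c1 Psi + c2 Psi + c3 Psi + c4 Psi)*Vb^2"
  have "c1 Psi*(c1 b)^2 + c2 Psi*(c2 b)^2 + c3 Psi*(c3 b)^2 + c4 Psi*(c4 b)^2 \<le> Bm"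
  proof -
    have "c1 Psi*(c1 b)^2 \<le> c1 Psi*Vb^2" using P sqb[OF bb1] by (intro mult_left_mono) auto
    moreover have "c2 Psi*(c2 b)^2 \<le> c2 Psi*Vb^2" using P sqb[OF bb2] by (intro mult_left_mono) auto
    moreover have "c3 Psi*(c3 b)^2 \<le> c3 Psi*Vb^2" using P sqb[OF bb3] by (intro mult_left_mono) auto
    moreover have "c4 Psi*(c4 b)^2 \<le> c4 Psi*Vb^2" using P sqb[OF bb4] by (intro mult_left_mono) auto
    ultimately show ?thesis unfolding Bm_def by (simp add: algebra_simps)
  qed
  moreover have "c1 Psi*(-l*c1 a)^2 + c2 Psi*(-l*c2 a)^2 + c3 Psi*(-l*c3 a)^2 + c4 Psi*(-l*c4 a + m)^2
      \<le> c1 Psi*(c1 b)^2 + c2 Psi*(c2 b)^2 + c3 Psi*(c3 b)^2 + c4 Psi*(c4 b)^2"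
    by (rule sq_bound[OF P o])
  ultimately have U: "c1 Psi*(-l*c1 a)^2 + c2 Psi*(-l*c2 a)^2 + c3 Psi*(-l*c3 a)^2 + c4 Psi*(-l*c4 a + m)^2 \<le> Bm"
    by linarith
  have nn: "c1 Psi*(-l*c1 a)^2 \<ge> 0" "c2 Psi*(-l*c2 a)^2 \<ge> 0" "c3 Psi*(-l*c3 a)^2 \<ge> 0" "c4 Psi*(-l*c4 a + m)^2 \<ge> 0"
    using P by simp_all
  have Bm0: "Bm \<ge> 0" unfolding Bm_def using P by simp
  have RR: "R = 1 + Bm*(1/c1 Psi + 1/c2 Psi + 1/c3 Psi + 1/c4 Psi) + Vb" unfolding R Bm_def Vb_def by simp
  have ip: "1/c1 Psi > 0" "1/c2 Psi > 0" "1/c3 Psi > 0" "1/c4 Psi > 0" using P by simp_all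
  have Bi: "Bm/c1 Psi \<le> Bm*(1/c1 Psi + 1/c2 Psi + 1/c3 Psi + 1/c4 Psi)"
       "Bm/c2 Psi \<le> Bm*(1/c1 Psi + 1/c2 Psi + 1/c3 Psi + 1/c4 Psi)"
       "Bm/c3 Psi \<le> Bm*(1/c1 Psi + 1/c2 Psi + 1/c3 Psi + 1/c4 Psi)"
       "Bm/c4 Psi \<le> Bm*(1/c1 Psi + 1/c2 Psi + 1/c3 Psi + 1/c4 Psi)"
    using Bm0 ip by (simp_all add: divide_inverse mult_left_mono del: inverse_eq_divide)
  have BR: "Bm*(1/c1 Psi + 1/c2 Psi + 1/c3 Psi + 1/c4 Psi) \<ge> 0" using Bm0 ip by simp
  show "R \<ge> 1" using RR BR Vb0 by linarith
  show "\<bar>c1 b\<bar> \<le> R" using bb1 RR BR by linarith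
  show "\<bar>c2 b\<bar> \<le> R" using bb2 RR BR by linarith
  show "\<bar>c3 b\<bar> \<le> R" using bb3 RR BR by linarith
  show "\<bar>c4 b\<bar> \<le> R" using bb4 RR BR by linarith
  have "\<bar>-l*c1 a\<bar> \<le> 1 + Bm/c1 Psi" by (rule abs_le_from_sq[OF P(1)]) (use U nn in linarith)
  then show "\<bar>-l*c1 a\<bar> \<le> R" using RR Bi Vb0 by linarith
  have "\<bar>-l*c2 a\<bar> \<le> 1 + Bm/c2 Psi" by (rule abs_le_from_sq[OF P(2)]) (use U nn in linarith)
  then show "\<bar>-l*c2 a\<bar> \<le> R" using RR Bi Vb0 by linarith
  have "\<bar>-l*c3 a\<bar> \<le> 1 + Bm/c3 Psi" by (rule abs_le_from_sq[OF P(3)]) (use U nn in linarith)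
  then show "\<bar>-l*c3 a\<bar> \<le> R" using RR Bi Vb0 by linarith
  have "\<bar>-l*c4 a + m\<bar> \<le> 1 + Bm/c4 Psi" by (rule abs_le_from_sq[OF P(4)]) (use U nn in linarith)
  then show "\<bar>-l*c4 a + m\<bar> \<le> R" using RR Bi Vb0 by linarith
qed


lemma part_b_int:
  fixes P1 P2 P3 P4 b1 b2 b3 b4 u1 u2 u3 u4 e1 e2 e3 e4 d1 d2 d3 d4 \<psi> E R Kb :: real
  assumes P: "P1 > 0" "P2 > 0" "P3 > 0" "P4 > 0" and ps: "\<psi> > 0" "\<psi> < 1"
    and o: "P1*u1*(b1+u1) + P2*u2*(b2+u2) + P3*u3*(b3+u3) + P4*u4*(b4+u4) = 0"
    and u: "\<bar>u1\<bar> \<le> R" "\<bar>u2\<bar> \<le> R" "\<bar>u3\<bar> \<le> R" "\<bar>u4\<bar> \<le> R"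
    and e: "\<bar>e1\<bar> \<le> E" "\<bar>e2\<bar> \<le> E" "\<bar>e3\<bar> \<le> E" "\<bar>e4\<bar> \<le> E"
    and E: "0 \<le> E" "E \<le> Kb*\<psi>^2"
    and d: "d1 = \<psi>*(P1*(b1+u1)) + e1" "d2 = \<psi>*(P2*(b2+u2)) + e2" "d3 = \<psi>*(P3*(b3+u3)) + e3" "d4 = \<psi>*(P4*(b4+u4)) + e4"
  shows "1/(2*\<psi>) * ((1/P1)*d1*d1 + (1/P2)*d2*d2 + (1/P3)*d3*d3 + (1/P4)*d4*d4)
           - (b1*d1 + b2*d2 + b3*d3 + b4*d4)
         \<le> - 1/2 * (b1*(P1*(b1+u1)) + b2*(P2*(b2+u2)) + b3*(P3*(b3+u3)) + b4*(P4*(b4+u4))) * \<psi>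
           + (4*R + (1/(2*P1) + 1/(2*P2) + 1/(2*P3) + 1/(2*P4)))*(Kb + Kb^2)*\<psi>^2"
proof -
  define Q where "Q = 1/(2*P1) + 1/(2*P2) + 1/(2*P3) + 1/(2*P4)"
  have Q0: "Q \<ge> 0" unfolding Q_def using P by simp
  have R0: "R \<ge> 0" using u(1) by linarith
  have ci: "1/(2*\<psi>)*((1/P)*(\<psi>*(P*(b+u))+ee)*(\<psi>*(P*(b+u))+ee)) - b*(\<psi>*(P*(b+u))+ee)
     = \<psi>/2*(P*(b+u)*(b+u) - 2*b*(P*(b+u))) + u*ee + 1/(2*\<psi>)*((1/P)*ee*ee)" if "P > 0" for P b u ee
    using comp_id[OF that ps(1), of "b+u" ee b] by simp
  have sum: "1/(2*\<psi>) * ((1/P1)*d1*d1 + (1/P2)*d2*d2 + (1/P3)*d3*d3 + (1/P4)*d4*d4)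
           - (b1*d1 + b2*d2 + b3*d3 + b4*d4)
      = (1/(2*\<psi>)*((1/P1)*d1*d1) - b1*d1) + (1/(2*\<psi>)*((1/P2)*d2*d2) - b2*d2)
        + (1/(2*\<psi>)*((1/P3)*d3*d3) - b3*d3) + (1/(2*\<psi>)*((1/P4)*d4*d4) - b4*d4)"
    by (simp add: algebra_simps)
  also have "\<dots> = (\<psi>/2*(P1*(b1+u1)*(b1+u1) - 2*b1*(P1*(b1+u1))) + \<psi>/2*(P2*(b2+u2)*(b2+u2) - 2*b2*(P2*(b2+u2)))
        + \<psi>/2*(P3*(b3+u3)*(b3+u3) - 2*b3*(P3*(b3+u3))) + \<psi>/2*(P4*(b4+u4)*(b4+u4) - 2*b4*(P4*(b4+u4))))
        + (u1*e1 + u2*e2 + u3*e3 + u4*e4)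
        + (1/(2*\<psi>)*((1/P1)*e1*e1) + 1/(2*\<psi>)*((1/P2)*e2*e2) + 1/(2*\<psi>)*((1/P3)*e3*e3) + 1/(2*\<psi>)*((1/P4)*e4*e4))"
    unfolding d ci[OF P(1)] ci[OF P(2)] ci[OF P(3)] ci[OF P(4)] by (simp add: algebra_simps)
  also have "(\<psi>/2*(P1*(b1+u1)*(b1+u1) - 2*b1*(P1*(b1+u1))) + \<psi>/2*(P2*(b2+u2)*(b2+u2) - 2*b2*(P2*(b2+u2)))
        + \<psi>/2*(P3*(b3+u3)*(b3+u3) - 2*b3*(P3*(b3+u3))) + \<psi>/2*(P4*(b4+u4)*(b4+u4) - 2*b4*(P4*(b4+u4))))
      = - 1/2 * (b1*(P1*(b1+u1)) + b2*(P2*(b2+u2)) + b3*(P3*(b3+u3)) + b4*(P4*(b4+u4))) * \<psi>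
        + \<psi>/2 * (P1*u1*(b1+u1) + P2*u2*(b2+u2) + P3*u3*(b3+u3) + P4*u4*(b4+u4))"
    by (simp add: algebra_simps)
  also have "\<psi>/2 * (P1*u1*(b1+u1) + P2*u2*(b2+u2) + P3*u3*(b3+u3) + P4*u4*(b4+u4)) = 0" using o by simp
  finally have main: "1/(2*\<psi>) * ((1/P1)*d1*d1 + (1/P2)*d2*d2 + (1/P3)*d3*d3 + (1/P4)*d4*d4)
           - (b1*d1 + b2*d2 + b3*d3 + b4*d4)
      = - 1/2 * (b1*(P1*(b1+u1)) + b2*(P2*(b2+u2)) + b3*(P3*(b3+u3)) + b4*(P4*(b4+u4))) * \<psi>
        + (u1*e1 + u2*e2 + u3*e3 + u4*e4)
        + (1/(2*\<psi>)*((1/P1)*e1*e1) + 1/(2*\<psi>)*((1/P2)*e2*e2) + 1/(2*\<psi>)*((1/P3)*e3*e3) + 1/(2*\<psi>)*((1/P4)*e4*e4))"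
    by simp
  have ue: "u1*e1 + u2*e2 + u3*e3 + u4*e4 \<le> 4*R*E"
    using ue_bound[OF u(1) e(1)] ue_bound[OF u(2) e(2)] ue_bound[OF u(3) e(3)] ue_bound[OF u(4) e(4)] by linarith
  have es: "1/(2*\<psi>)*((1/P1)*e1*e1) + 1/(2*\<psi>)*((1/P2)*e2*e2) + 1/(2*\<psi>)*((1/P3)*e3*e3) + 1/(2*\<psi>)*((1/P4)*e4*e4)
      \<le> Q*E^2/\<psi>"
  proof -
    have "1/(2*\<psi>)*((1/P1)*e1*e1) + 1/(2*\<psi>)*((1/P2)*e2*e2) + 1/(2*\<psi>)*((1/P3)*e3*e3) + 1/(2*\<psi>)*((1/P4)*e4*e4)
      \<le> 1/(2*P1) * E^2 / \<psi> + 1/(2*P2) * E^2 / \<psi> + 1/(2*P3) * E^2 / \<psi> + 1/(2*P4) * E^2 / \<psi>"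
      using esq_bound[OF P(1) ps(1) e(1)] esq_bound[OF P(2) ps(1) e(2)] esq_bound[OF P(3) ps(1) e(3)]
        esq_bound[OF P(4) ps(1) e(4)] by linarith
    also have "\<dots> = Q*E^2/\<psi>" unfolding Q_def using P ps by (simp add: field_simps)
    finally show ?thesis .
  qed
  have tl: "4*R*E + Q*E^2/\<psi> \<le> (4*R + Q)*(Kb + Kb^2)*\<psi>^2"
    by (rule part_b_tail[OF E ps R0 Q0])
  show ?thesis using main ue es tl unfolding Q_def by linarith
qed

lemma part_b_bd:
  fixes P1 P2 P3 P4 b1 b2 b3 b4 e1 e2 e3 e4 \<psi> E R Kb :: real
  assumes P: "P1 > 0" "P2 > 0" "P3 > 0" "P4 > 0" and ps: "\<psi> > 0" "\<psi> < 1"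
    and b: "\<bar>b1\<bar> \<le> R" "\<bar>b2\<bar> \<le> R" "\<bar>b3\<bar> \<le> R" "\<bar>b4\<bar> \<le> R"
    and e: "\<bar>e1\<bar> \<le> E" "\<bar>e2\<bar> \<le> E" "\<bar>e3\<bar> \<le> E" "\<bar>e4\<bar> \<le> E"
    and E: "0 \<le> E" "E \<le> Kb*\<psi>^2"
  shows "1/(2*\<psi>) * ((1/P1)*e1*e1 + (1/P2)*e2*e2 + (1/P3)*e3*e3 + (1/P4)*e4*e4)
           - (b1*e1 + b2*e2 + b3*e3 + b4*e4)
         \<le> (4*R + (1/(2*P1) + 1/(2*P2) + 1/(2*P3) + 1/(2*P4)))*(Kb + Kb^2)*\<psi>^2"
proof -
  define Q where "Q = 1/(2*P1) + 1/(2*P2) + 1/(2*P3) + 1/(2*P4)"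
  have Q0: "Q \<ge> 0" unfolding Q_def using P by simp
  have R0: "R \<ge> 0" using b(1) by linarith
  have nb: "\<bar>-b1\<bar> \<le> R" "\<bar>-b2\<bar> \<le> R" "\<bar>-b3\<bar> \<le> R" "\<bar>-b4\<bar> \<le> R" using b by simp_all
  have ue: "-b1*e1 + -b2*e2 + -b3*e3 + -b4*e4 \<le> 4*R*E"
    using ue_bound[OF nb(1) e(1)] ue_bound[OF nb(2) e(2)] ue_bound[OF nb(3) e(3)] ue_bound[OF nb(4) e(4)] by linarith
  have es: "1/(2*\<psi>)*((1/P1)*e1*e1) + 1/(2*\<psi>)*((1/P2)*e2*e2) + 1/(2*\<psi>)*((1/P3)*e3*e3) + 1/(2*\<psi>)*((1/P4)*e4*e4)
      \<le> Q*E^2/\<psi>"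
  proof -
    have "1/(2*\<psi>)*((1/P1)*e1*e1) + 1/(2*\<psi>)*((1/P2)*e2*e2) + 1/(2*\<psi>)*((1/P3)*e3*e3) + 1/(2*\<psi>)*((1/P4)*e4*e4)
      \<le> 1/(2*P1) * E^2 / \<psi> + 1/(2*P2) * E^2 / \<psi> + 1/(2*P3) * E^2 / \<psi> + 1/(2*P4) * E^2 / \<psi>"
      using esq_bound[OF P(1) ps(1) e(1)] esq_bound[OF P(2) ps(1) e(2)] esq_bound[OF P(3) ps(1) e(3)]
        esq_bound[OF P(4) ps(1) e(4)] by linarith
    also have "\<dots> = Q*E^2/\<psi>" unfolding Q_def using P ps by (simp add: field_simps)
    finally show ?thesis .
  qed
  have sum: "1/(2*\<psi>) * ((1/P1)*e1*e1 + (1/P2)*e2*e2 + (1/P3)*e3*e3 + (1/P4)*e4*e4)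
           - (b1*e1 + b2*e2 + b3*e3 + b4*e4)
      = (1/(2*\<psi>)*((1/P1)*e1*e1) + 1/(2*\<psi>)*((1/P2)*e2*e2) + 1/(2*\<psi>)*((1/P3)*e3*e3) + 1/(2*\<psi>)*((1/P4)*e4*e4))
        + (-b1*e1 + -b2*e2 + -b3*e3 + -b4*e4)"
    by (simp add: algebra_simps)
  have tl: "4*R*E + Q*E^2/\<psi> \<le> (4*R + Q)*(Kb + Kb^2)*\<psi>^2"
    by (rule part_b_tail[OF E ps R0 Q0])
  show ?thesis using sum ue es tl unfolding Q_def by linarith
qed

lemma K1a_bound:
  fixes M k :: real
  assumes "M \<ge> 0"
  shows "\<bar>M*k^2\<bar>^1 \<le> M/2 + M/2*\<bar>k\<bar>^4"
proof -
  have "0 \<le> (k^2 - 1)^2" by simp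
  then have "k^2 \<le> 1/2 + 1/2*k^4" by (simp add: power2_eq_square algebra_simps power4_eq_xxxx)
  then have "M*k^2 \<le> M*(1/2 + 1/2*k^4)" using assms by (rule mult_left_mono)
  moreover have "\<bar>k\<bar>^4 = k^4" by (simp add: power4_eq_xxxx power2_eq_square[symmetric])
  ultimately show ?thesis using assms by (simp add: algebra_simps)
qed

lemma K1b_bound:
  fixes M k :: real
  shows "\<bar>M*(k + k^2)\<bar>^2 \<le> M^2 + 3*M^2*\<bar>k\<bar>^4"
proof -
  have "0 \<le> (k^2 - 1)^2" by simp
  then have h1: "2*k^2 \<le> 1 + k^4" by (simp add: power2_eq_square algebra_simps power4_eq_xxxx)
  have "0 \<le> (k - k^2)^2" by simp
  then have h2: "(k + k^2)^2 \<le> 2*k^2 + 2*k^4" by (simp add: power2_eq_square algebra_simps power4_eq_xxxx)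
  have "(k + k^2)^2 \<le> 1 + 3*k^4" using h1 h2 by linarith
  then have "M^2*(k + k^2)^2 \<le> M^2*(1 + 3*k^4)" by (rule mult_left_mono) simp
  moreover have "\<bar>k\<bar>^4 = k^4" by (simp add: power4_eq_xxxx power2_eq_square[symmetric])
  moreover have "\<bar>M*(k + k^2)\<bar>^2 = M^2*(k + k^2)^2" by (simp add: power_mult_distrib)
  ultimately show ?thesis by (simp add: algebra_simps)
qed


lemma set_meas_comp:
  fixes F :: "real \<Rightarrow> real" and K :: "real \<Rightarrow> real4 \<Rightarrow> real"
  assumes K: "set_borel_measurable borel A (\<lambda>(t,x). K t x)" and F0: "F 0 = 0"
    and Fm: "F \<in> borel_measurable borel"
  shows "set_borel_measurable borel A (\<lambda>(t,x). F (K t x))"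
proof -
  let ?g = "\<lambda>y. indicator A y *\<^sub>R (case y of (t,x) \<Rightarrow> K t x)"
  have g: "?g \<in> borel_measurable borel" using K unfolding set_borel_measurable_def .
  have eq: "(\<lambda>y. indicator A y *\<^sub>R (case y of (t,x) \<Rightarrow> F (K t x))) = (\<lambda>y. F (?g y))"
    by (rule ext) (auto simp: indicator_def F0 split: prod.splits)
  show ?thesis unfolding set_borel_measurable_def eq using measurable_compose[OF g Fm] .
qed

lemma ball_pairI: "(\<And>t x. (t,x) \<in> A \<Longrightarrow> P t x) \<Longrightarrow> \<forall>(t,x)\<in>A. P t x"
  by auto

theorem proposition5p8:
  fixes T S0 Sig0 A0 Slo Shi TC KY KV Kw psi0 :: real
    and Cpay :: "real \<Rightarrow> real" and C :: "real \<Rightarrow> real \<Rightarrow> real \<Rightarrow> real"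
    and Vpay :: "real \<Rightarrow> real \<Rightarrow> real \<Rightarrow> real" and V :: "real \<Rightarrow> real4 \<Rightarrow> real"
    and \<alpha> \<beta> \<gamma> \<delta> :: "real \<Rightarrow> real \<Rightarrow> real \<Rightarrow> real \<Rightarrow> real"
    and Psi zlo zhi :: real4
    and U :: "real \<Rightarrow> real"
    and PP :: "path measure set" and zetaP :: "path measure \<Rightarrow> real \<Rightarrow> path \<Rightarrow> real4"
    and YY :: "(real \<Rightarrow> path \<Rightarrow> real \<times> real) set"
    and Ypl :: "(real \<Rightarrow> path \<Rightarrow> real \<times> real) \<Rightarrow> path measure \<Rightarrow> real \<Rightarrow> path \<Rightarrow> real"
    and KC K0 w :: "real \<Rightarrow> real4 \<Rightarrow> real"
    and Pf :: "real \<Rightarrow> path measure"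
  assumes setting: "T > 0" "S0 > 0" "Sig0 > 0" "0 < Slo" "Slo < Sig0" "Sig0 < Shi"
    and Psi_pos: "c1 Psi > 0" "c2 Psi > 0" "c3 Psi > 0" "c4 Psi > 0"
    and coeff_borel: "(\<lambda>(t,S,A,M). \<alpha> t S A M) \<in> borel_measurable borel"
      "(\<lambda>(t,S,A,M). \<beta> t S A M) \<in> borel_measurable borel"
      "(\<lambda>(t,S,A,M). \<gamma> t S A M) \<in> borel_measurable borel"
      "(\<lambda>(t,S,A,M). \<delta> t S A M) \<in> borel_measurable borel"
    \<comment> \<open>\<open>\<P> \<subseteq> \<P>\<^sup>0\<close> (the expressible part: probability measures on the path space, progressively
        measurable controls, positivity, \<open>\<xi>\<^sup>P \<ge> 0\<close> and the call-drift constraint)\<close>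
    and models: "\<forall>P\<in>PP. prob_space P \<and> space P = Omega T S0 Sig0 A0 \<and>
         sets P = Fsets T (Omega T S0 Sig0 A0) \<and> prog_meas T (Omega T S0 Sig0 A0) (zetaP P) \<and>
         (AE \<omega> in P. \<forall>t\<in>{0..T}. pS \<omega> t > 0 \<and> pSig \<omega> t > 0) \<and>
         AE_dtP T P (\<lambda>t \<omega>. c4 (zetaP P t \<omega>) \<ge> 0 \<and> bC C t (Xp \<omega> t) (zetaP P t \<omega>) = 0)"
    \<comment> \<open>(A)(a)\<close>
    and A_a: "KY > 0" "\<forall>\<upsilon>\<in>YY. \<forall>P\<in>PP. AE_dtP T P (\<lambda>t \<omega>. Ypl \<upsilon> P t \<omega> > - KY)"
    \<comment> \<open>(A)(b)\<close>
    and A_b_ref: "\<exists>P\<in>PP. AE_dtP T P (\<lambda>t \<omega>. zetaP P t \<omega> = zeta0 (pSig \<omega> t))"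
    and A_b_consts: "c1 zlo < 0" "0 < c1 zhi" "0 < c2 zlo" "c2 zlo < Slo" "Shi < c2 zhi"
      "c3 zlo < 0" "0 < c3 zhi" "c4 zhi > 0"
    and A_b_bounds: "\<forall>P\<in>PP. AE_dtP T P (\<lambda>t \<omega>. zetaP P t \<omega> \<in> Zbox zlo zhi \<and>
                                             Slo \<le> pSig \<omega> t \<and> pSig \<omega> t \<le> Shi)"
    \<comment> \<open>(A)(c)\<close>
    and A_c: "TC \<ge> T" "C122_on ({0<..<TC} \<times> {0<..} \<times> {0<..}) C"
      "continuous_on ({0..TC} \<times> {0..} \<times> {0..}) (\<lambda>(t,S,s). C t S s)"
      "\<forall>s\<in>{Slo..Shi}. \<forall>t\<in>{0<..<TC}. \<forall>S>0. Cdt C t S s + 1/2 * s\<^sup>2 * S\<^sup>2 * CdS (CdS C) t S s = 0"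
      "\<forall>s\<in>{Slo..Shi}. \<forall>S>0. C TC S s = Cpay S"
      "\<forall>t\<in>{0<..<T}. \<forall>S>0. \<forall>s\<in>{Slo..Shi}. CdSig C t S s \<noteq> 0"
      "\<forall>(t,x)\<in>D T Slo Shi. \<bar>CdSig (CdSig C) t (xS x) (xSig x)\<bar> \<le>
          KC t x * (\<bar>CdSig C t (xS x) (xSig x)\<bar> + \<bar>(xS x)\<^sup>2 * CdS (CdS C) t (xS x) (xSig x)\<bar>
                    + \<bar>xS x * CdSig (CdS C) t (xS x) (xSig x)\<bar>)"
      "Lp T PP 2 KC"
    \<comment> \<open>(A)(d)\<close>
    and A_d: "C12212_on (D0 T) V" "continuous_on (D0cl T) (\<lambda>(t,x). V t x)"
      "\<forall>(t,x)\<in>D0 T. Slo \<le> xSig x \<and> xSig x \<le> Shi \<longrightarrow> Lop \<alpha> \<beta> \<gamma> V t x = 0"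
      "\<forall>(t,x)\<in>D0 T. Slo \<le> xSig x \<and> xSig x \<le> Shi \<and> xS x \<ge> xM x \<longrightarrow>
          gam_at \<delta> t x * Vdx 2 V t x + Vdx 3 V t x = 0"
      "\<forall>x. xS x > 0 \<and> xM x > 0 \<and> Slo \<le> xSig x \<and> xSig x \<le> Shi \<longrightarrow> V T x = Vpay (xS x) (xA x) (xM x)"
      "\<forall>(t,x)\<in>D T Slo Shi. \<bar>Vdx 4 V t x\<bar> \<le> KV \<and>
          \<bar>gam_at \<beta> t x * Vdx 2 V t x + (xS x)\<^sup>2 * Gam \<gamma> V t x\<bar> \<le> KV \<and>
          \<bar>xS x * dDel_dSig \<gamma> V t x\<bar> \<le> KV \<and> \<bar>Vdx 4 (Vdx 4 V) t x\<bar> \<le> KV"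
    \<comment> \<open>(A)(e)\<close>
    and A_e: "C12212_on (D0 T) w" "continuous_on (D0cl T) (\<lambda>(t,x). w t x)"
      "\<forall>(t,x)\<in>D0 T. Slo \<le> xSig x \<and> xSig x \<le> Shi \<longrightarrow>
          Lop \<alpha> \<beta> \<gamma> w t x + 1/2 * gtil Psi C \<beta> \<gamma> V t x = 0"
      "\<forall>(t,x)\<in>D0 T. Slo \<le> xSig x \<and> xSig x \<le> Shi \<and> xS x \<ge> xM x \<longrightarrow>
          gam_at \<delta> t x * Vdx 2 w t x + Vdx 3 w t x = 0"
      "\<forall>x. xS x > 0 \<and> xM x > 0 \<and> Slo \<le> xSig x \<and> xSig x \<le> Shi \<longrightarrow> w T x = 0"
      "\<forall>(t,x)\<in>D T Slo Shi. 0 \<le> w t x \<and> w t x \<le> Kw"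
      "Lp T PP 4 (Vdx 4 w)" "Lp T PP 4 (\<lambda>t x. xS x * Del \<gamma> w t x)"
      "Lp T PP 4 (\<lambda>t x. gam_at \<beta> t x * Vdx 2 w t x + (xS x)\<^sup>2 * Gam \<gamma> w t x)"
      "Lp T PP 4 (\<lambda>t x. xS x * dDel_dSig \<gamma> w t x)" "Lp T PP 4 (Vdx 4 (Vdx 4 w))"
    \<comment> \<open>(A)(f)\<close>
    and A_f: "C3 U" "\<forall>y. deriv U y > 0" "\<forall>y. deriv (deriv U) y < 0"
      "\<forall>y1 y2. y1 \<le> y2 \<longrightarrow> - deriv (deriv U) y2 / deriv U y2 \<le> - deriv (deriv U) y1 / deriv U y1"
    \<comment> \<open>(H): delta-vega hedge admissible, candidate asymptotic model family\<close>
    and H_hedge: "(\<lambda>t \<omega>. ups_star C \<gamma> V t (Xp \<omega> t)) \<in> YY"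
    and H_family: "0 < psi0" "psi0 < 1" "Lp T PP 4 K0"
      "\<forall>\<psi>\<in>{0<..<psi0}. Pf \<psi> \<in> PP \<and>
          AE_dtP T (Pf \<psi>) (\<lambda>t \<omega>. norm (zetaP (Pf \<psi>) t \<omega> - zpsi Slo Shi Psi C \<beta> \<gamma> V \<psi> t (Xp \<omega> t))
                                  \<le> K0 t (Xp \<omega> t) * \<psi>\<^sup>2)"
  shows "(\<forall>K. (\<forall>(t,x)\<in>D0 T. 0 \<le> K t x) \<and> Lp T PP 4 K \<longrightarrow>
            (\<exists>K1. (\<forall>(t,x)\<in>D0 T. 0 \<le> K1 t x) \<and> Lp T PP 1 K1 \<and>
               (\<forall>(t,x)\<in>D T Slo Shi. \<forall>z\<in>Z0 C t x \<inter> Zbox zlo zhi. \<forall>\<psi>\<in>{0<..<1}.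
                  norm (z - zeta0 (xSig x)) \<le> K t x * \<psi> \<longrightarrow>
                  H1 Psi \<beta> \<gamma> V \<psi> t x z \<ge> - 1/2 * gtil Psi C \<beta> \<gamma> V t x * \<psi> - K1 t x * \<psi>\<^sup>2)))
       \<and> (\<forall>Kb. (\<forall>(t,x)\<in>D0 T. 0 \<le> Kb t x) \<and> Lp T PP 4 Kb \<longrightarrow>
            (\<exists>K1. (\<forall>(t,x)\<in>D0 T. 0 \<le> K1 t x) \<and> Lp T PP 2 K1 \<and>
               (\<forall>(t,x)\<in>D T Slo Shi. \<forall>z\<in>Zbox zlo zhi. \<forall>\<psi>\<in>{0<..<1}.
                  norm (z - zpsi Slo Shi Psi C \<beta> \<gamma> V \<psi> t x) \<le> Kb t x * \<psi>\<^sup>2 \<longrightarrow>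
                  H1 Psi \<beta> \<gamma> V \<psi> t x z \<le>
                    - 1/2 * gtil Psi C \<beta> \<gamma> V t x * (if Slo < xSig x \<and> xSig x < Shi then 1 else 0) * \<psi>
                    + K1 t x * \<psi>\<^sup>2)))"
proof -
  have Pp: "c1 Psi > 0" "c2 Psi > 0" "c3 Psi > 0" "c4 Psi > 0" using Psi_pos by auto
  have Slo0: "0 < Slo" using setting(4) .
  have Shi0: "0 < Shi" using setting by linarith
  have T0: "T \<ge> 0" using setting(1) by simp
  have PPp: "\<forall>P\<in>PP. prob_space P" using models by blast
  define R where "R = 1 + (c1 Psi + c2 Psi + c3 Psi + c4 Psi)*((1+Shi)*\<bar>KV\<bar>)^2*(1/c1 Psi + 1/c2 Psi + 1/c3 Psi + 1/c4 Psi)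
              + (1+Shi)*\<bar>KV\<bar>"
  have R1: "R \<ge> 1"
  proof -
    have "(c1 Psi + c2 Psi + c3 Psi + c4 Psi)*((1+Shi)*\<bar>KV\<bar>)^2*(1/c1 Psi + 1/c2 Psi + 1/c3 Psi + 1/c4 Psi) \<ge> 0"
      using Pp by simp
    moreover have "(1+Shi)*\<bar>KV\<bar> \<ge> 0" using Shi0 by simp
    ultimately show ?thesis unfolding R_def by linarith
  qed
  have Dx: "0 < t" "t < T" "0 < xS x" "0 < xM x" "Slo \<le> xSig x" "xSig x \<le> Shi" "0 < xSig x"
    if "(t,x) \<in> D T Slo Shi" for t x
    using that Slo0 by (auto simp: D_def)
  have D0x: "(t,x) \<in> D0 T" if "(t,x) \<in> D T Slo Shi" for t x
    using Dx[OF that] by (simp add: D0_def)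
  have CSne: "CdSig C t (xS x) (xSig x) \<noteq> 0" if "(t,x) \<in> D T Slo Shi" for t x
    using A_c(6) Dx[OF that] by auto
  have KVb: "\<bar>Vdx 4 V t x\<bar> \<le> KV" "\<bar>gam_at \<beta> t x * Vdx 2 V t x + (xS x)\<^sup>2 * Gam \<gamma> V t x\<bar> \<le> KV"
      "\<bar>xS x * dDel_dSig \<gamma> V t x\<bar> \<le> KV" "\<bar>Vdx 4 (Vdx 4 V) t x\<bar> \<le> KV"
    if "(t,x) \<in> D T Slo Shi" for t x
    using bspec[OF A_d(6) that] by auto
  have hH1: "H1 Psi \<beta> \<gamma> V \<psi> t x z = 1/(2*\<psi>) * ((1/c1 Psi)*(c1 z)*(c1 z) + (1/c2 Psi)*(c2 z - xSig x)*(c2 z - xSig x)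
        + (1/c3 Psi)*(c3 z)*(c3 z) + (1/c4 Psi)*(c4 z)*(c4 z))
      - (c1 (vvec \<beta> \<gamma> V t x)*(c1 z) + c2 (vvec \<beta> \<gamma> V t x)*(c2 z - xSig x)
         + c3 (vvec \<beta> \<gamma> V t x)*(c3 z) + c4 (vvec \<beta> \<gamma> V t x)*(c4 z))" for \<psi> t x z
    by (simp add: H1_def Let_def wdot_def dot4_def inv4_def zeta0_def)
  have hg: "gtil Psi C \<beta> \<gamma> V t x =
      c1 (vvec \<beta> \<gamma> V t x)*(c1 Psi*(c1 (vvec \<beta> \<gamma> V t x) + -lam Psi C \<beta> \<gamma> V t x*c1 (cvec C t x)))
    + c2 (vvec \<beta> \<gamma> V t x)*(c2 Psi*(c2 (vvec \<beta> \<gamma> V t x) + -lam Psi C \<beta> \<gamma> V t x*c2 (cvec C t x)))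
    + c3 (vvec \<beta> \<gamma> V t x)*(c3 Psi*(c3 (vvec \<beta> \<gamma> V t x) + -lam Psi C \<beta> \<gamma> V t x*c3 (cvec C t x)))
    + c4 (vvec \<beta> \<gamma> V t x)*(c4 Psi*(c4 (vvec \<beta> \<gamma> V t x) + (-lam Psi C \<beta> \<gamma> V t x*c4 (cvec C t x) + mu Psi C \<beta> \<gamma> V t x)))"
    for t x
    by (simp add: gtil_def dot4_def ztil_def Let_def)
  have hz: "c1 (ztil Psi C \<beta> \<gamma> V t x) = c1 Psi*(c1 (vvec \<beta> \<gamma> V t x) + -lam Psi C \<beta> \<gamma> V t x*c1 (cvec C t x))"
       "c2 (ztil Psi C \<beta> \<gamma> V t x) = c2 Psi*(c2 (vvec \<beta> \<gamma> V t x) + -lam Psi C \<beta> \<gamma> V t x*c2 (cvec C t x))"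
       "c3 (ztil Psi C \<beta> \<gamma> V t x) = c3 Psi*(c3 (vvec \<beta> \<gamma> V t x) + -lam Psi C \<beta> \<gamma> V t x*c3 (cvec C t x))"
       "c4 (ztil Psi C \<beta> \<gamma> V t x) = c4 Psi*(c4 (vvec \<beta> \<gamma> V t x) + (-lam Psi C \<beta> \<gamma> V t x*c4 (cvec C t x) + mu Psi C \<beta> \<gamma> V t x))"
    for t x by (simp_all add: ztil_def Let_def)
  have ca: "c1 (cvec C t x) = CdSig C t (xS x) (xSig x)"
       "c2 (cvec C t x) = xSig x * (xS x)^2 * CdS (CdS C) t (xS x) (xSig x)"
       "c3 (cvec C t x) = xSig x * xS x * CdSig (CdS C) t (xS x) (xSig x)"
       "c4 (cvec C t x) = 1/2 * CdSig (CdSig C) t (xS x) (xSig x)" for t x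
    by (simp_all add: cvec_def Let_def)
  show ?thesis
  proof (intro conjI allI impI)
    fix K assume K: "(\<forall>(t,x)\<in>D0 T. 0 \<le> K t x) \<and> Lp T PP 4 K"
    define Ma where "Ma = 2*R/Slo + R"
    have Ma0: "Ma \<ge> 0" unfolding Ma_def using R1 Slo0 by simp
    show "\<exists>K1. (\<forall>(t,x)\<in>D0 T. 0 \<le> K1 t x) \<and> Lp T PP 1 K1 \<and>
               (\<forall>(t,x)\<in>D T Slo Shi. \<forall>z\<in>Z0 C t x \<inter> Zbox zlo zhi. \<forall>\<psi>\<in>{0<..<1}.
                  norm (z - zeta0 (xSig x)) \<le> K t x * \<psi> \<longrightarrow>
                  H1 Psi \<beta> \<gamma> V \<psi> t x z \<ge> - 1/2 * gtil Psi C \<beta> \<gamma> V t x * \<psi> - K1 t x * \<psi>\<^sup>2)"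
    proof (intro exI[of _ "\<lambda>t x. Ma * (K t x)^2"] conjI)
      show "\<forall>(t,x)\<in>D0 T. 0 \<le> Ma * (K t x)^2" using Ma0 by auto
      have Km: "set_borel_measurable borel (D0 T) (\<lambda>(t,x). K t x)" using K unfolding Lp_def by blast
      have meas: "set_borel_measurable borel (D0 T) (\<lambda>(t,x). Ma * (K t x)^2)"
        by (rule set_meas_comp[OF Km, where F="\<lambda>k. Ma * k^2"]) auto
      show "Lp T PP 1 (\<lambda>t x. Ma * (K t x)^2)"
        by (rule Lp_transfer[OF PPp meas, where G=K and q=4 and \<alpha>="Ma/2" and \<beta>="Ma/2"])
           (use K K1a_bound[OF Ma0] Ma0 T0 in auto)
      show "\<forall>(t,x)\<in>D T Slo Shi. \<forall>z\<in>Z0 C t x \<inter> Zbox zlo zhi. \<forall>\<psi>\<in>{0<..<1}.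
                  norm (z - zeta0 (xSig x)) \<le> K t x * \<psi> \<longrightarrow>
                  H1 Psi \<beta> \<gamma> V \<psi> t x z \<ge> - 1/2 * gtil Psi C \<beta> \<gamma> V t x * \<psi> - Ma * (K t x)^2 * \<psi>\<^sup>2"
      proof (rule ball_pairI, intro ballI impI)
        fix t x z \<psi>
        assume tx: "(t,x) \<in> D T Slo Shi" and z: "z \<in> Z0 C t x \<inter> Zbox zlo zhi" and ps: "\<psi> \<in> {0<..<1}"
          and hN: "norm (z - zeta0 (xSig x)) \<le> K t x * \<psi>"
        have ps0: "\<psi> > 0" using ps by simp
        note PF = point_facts[OF Pp CSne[OF tx] Dx(7)[OF tx] Dx(6)[OF tx] KVb[OF tx] R_def]
        define N where "N = norm (z - zeta0 (xSig x))"
        have sq: "1/(2*\<psi>) * ((1/c1 Psi)*(c1 z)*(c1 z) + (1/c2 Psi)*(c2 z - xSig x)*(c2 z - xSig x)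
            + (1/c3 Psi)*(c3 z)*(c3 z) + (1/c4 Psi)*(c4 z)*(c4 z))
          - (c1 (vvec \<beta> \<gamma> V t x)*(c1 z) + c2 (vvec \<beta> \<gamma> V t x)*(c2 z - xSig x)
             + c3 (vvec \<beta> \<gamma> V t x)*(c3 z) + c4 (vvec \<beta> \<gamma> V t x)*(c4 z))
          \<ge> - 1/2 * gtil Psi C \<beta> \<gamma> V t x * \<psi>
            + ((-lam Psi C \<beta> \<gamma> V t x*c1 (cvec C t x))*(c1 z) + (-lam Psi C \<beta> \<gamma> V t x*c2 (cvec C t x))*(c2 z - xSig x)
               + (-lam Psi C \<beta> \<gamma> V t x*c3 (cvec C t x))*(c3 z)
               + (-lam Psi C \<beta> \<gamma> V t x*c4 (cvec C t x) + mu Psi C \<beta> \<gamma> V t x)*(c4 z))"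
          unfolding hg by (rule part_a_sq[OF Pp ps0 PF(1)])
        have bz: "c1 z * CdSig C t (xS x) (xSig x) + 1/2 * (xS x)^2 * CdS (CdS C) t (xS x) (xSig x) * ((c2 z)^2 - (xSig x)^2)
            + c2 z * c3 z * xS x * CdSig (CdS C) t (xS x) (xSig x)
            + 1/2 * ((c3 z)^2 + c4 z) * CdSig (CdSig C) t (xS x) (xSig x) = 0"
          using z unfolding Z0_def bC_def Let_def by simp
        have z4: "c4 z \<ge> 0" using z unfolding Z0_def by simp
        have e2: "\<bar>c2 z - xSig x\<bar> \<le> N" using c_le_norm(2)[of "z - zeta0 (xSig x)"] unfolding N_def
          by (simp add: zeta0_def)
        have e3: "\<bar>c3 z\<bar> \<le> N" using c_le_norm(3)[of "z - zeta0 (xSig x)"] unfolding N_def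
          by (simp add: zeta0_def)
        have A2: "\<bar>lam Psi C \<beta> \<gamma> V t x*(xSig x * (xS x)^2 * CdS (CdS C) t (xS x) (xSig x))\<bar> \<le> R"
          using PF(8) unfolding ca by simp
        have A3: "\<bar>lam Psi C \<beta> \<gamma> V t x*(xSig x * xS x * CdSig (CdS C) t (xS x) (xSig x))\<bar> \<le> R"
          using PF(9) unfolding ca by simp
        have A4: "\<bar>-lam Psi C \<beta> \<gamma> V t x*(1/2 * CdSig (CdSig C) t (xS x) (xSig x)) + mu Psi C \<beta> \<gamma> V t x\<bar> \<le> R"
          using PF(10) unfolding ca by simp
        have lin: "(-lam Psi C \<beta> \<gamma> V t x*c1 (cvec C t x))*(c1 z) + (-lam Psi C \<beta> \<gamma> V t x*c2 (cvec C t x))*(c2 z - xSig x)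
               + (-lam Psi C \<beta> \<gamma> V t x*c3 (cvec C t x))*(c3 z)
               + (-lam Psi C \<beta> \<gamma> V t x*c4 (cvec C t x) + mu Psi C \<beta> \<gamma> V t x)*(c4 z) \<ge> -(2*R/Slo + R)*N^2"
          unfolding ca by (rule part_a_lin[OF bz Dx(5)[OF tx] Slo0 A2 A3 A4 PF(2) z4 e2 e3])
        have N0: "N \<ge> 0" unfolding N_def by simp
        have "N^2 \<le> (K t x * \<psi>)^2" using N0 hN unfolding N_def[symmetric] by (intro power_mono) auto
        then have "Ma * N^2 \<le> Ma * (K t x * \<psi>)^2" by (rule mult_left_mono) (rule Ma0)
        then have "Ma * N^2 \<le> Ma * (K t x)^2 * \<psi>^2" by (simp add: power_mult_distrib mult.assoc)
        then show "H1 Psi \<beta> \<gamma> V \<psi> t x z \<ge> - 1/2 * gtil Psi C \<beta> \<gamma> V t x * \<psi> - Ma * (K t x)^2 * \<psi>\<^sup>2"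
          unfolding hH1 using sq lin unfolding Ma_def by linarith
      qed
    qed
  next
    fix Kb assume Kb: "(\<forall>(t,x)\<in>D0 T. 0 \<le> Kb t x) \<and> Lp T PP 4 Kb"
    define Mb where "Mb = 4*R + (1/(2*c1 Psi) + 1/(2*c2 Psi) + 1/(2*c3 Psi) + 1/(2*c4 Psi))"
    have Mb0: "Mb \<ge> 0" unfolding Mb_def using R1 Pp by simp
    show "\<exists>K1. (\<forall>(t,x)\<in>D0 T. 0 \<le> K1 t x) \<and> Lp T PP 2 K1 \<and>
               (\<forall>(t,x)\<in>D T Slo Shi. \<forall>z\<in>Zbox zlo zhi. \<forall>\<psi>\<in>{0<..<1}.
                  norm (z - zpsi Slo Shi Psi C \<beta> \<gamma> V \<psi> t x) \<le> Kb t x * \<psi>\<^sup>2 \<longrightarrow>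
                  H1 Psi \<beta> \<gamma> V \<psi> t x z \<le>
                    - 1/2 * gtil Psi C \<beta> \<gamma> V t x * (if Slo < xSig x \<and> xSig x < Shi then 1 else 0) * \<psi>
                    + K1 t x * \<psi>\<^sup>2)"
    proof (intro exI[of _ "\<lambda>t x. Mb * (Kb t x + (Kb t x)^2)"] conjI)
      show "\<forall>(t,x)\<in>D0 T. 0 \<le> Mb * (Kb t x + (Kb t x)^2)" using Mb0 Kb by auto
      have Km: "set_borel_measurable borel (D0 T) (\<lambda>(t,x). Kb t x)" using Kb unfolding Lp_def by blast
      have meas: "set_borel_measurable borel (D0 T) (\<lambda>(t,x). Mb * (Kb t x + (Kb t x)^2))"
        by (rule set_meas_comp[OF Km, where F="\<lambda>k. Mb * (k + k^2)"]) auto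
      show "Lp T PP 2 (\<lambda>t x. Mb * (Kb t x + (Kb t x)^2))"
        by (rule Lp_transfer[OF PPp meas, where G=Kb and q=4 and \<alpha>="Mb^2" and \<beta>="3*Mb^2"])
           (use Kb K1b_bound T0 in auto)
      show "\<forall>(t,x)\<in>D T Slo Shi. \<forall>z\<in>Zbox zlo zhi. \<forall>\<psi>\<in>{0<..<1}.
                  norm (z - zpsi Slo Shi Psi C \<beta> \<gamma> V \<psi> t x) \<le> Kb t x * \<psi>\<^sup>2 \<longrightarrow>
                  H1 Psi \<beta> \<gamma> V \<psi> t x z \<le>
                    - 1/2 * gtil Psi C \<beta> \<gamma> V t x * (if Slo < xSig x \<and> xSig x < Shi then 1 else 0) * \<psi>
                    + Mb * (Kb t x + (Kb t x)^2) * \<psi>\<^sup>2"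
      proof (rule ball_pairI, intro ballI impI)
        fix t x z \<psi>
        assume tx: "(t,x) \<in> D T Slo Shi" and z: "z \<in> Zbox zlo zhi" and ps: "\<psi> \<in> {0<..<1}"
          and hE: "norm (z - zpsi Slo Shi Psi C \<beta> \<gamma> V \<psi> t x) \<le> Kb t x * \<psi>\<^sup>2"
        have ps0: "\<psi> > 0" "\<psi> < 1" using ps by simp_all
        note PF = point_facts[OF Pp CSne[OF tx] Dx(7)[OF tx] Dx(6)[OF tx] KVb[OF tx] R_def]
        define E where "E = norm (z - zpsi Slo Shi Psi C \<beta> \<gamma> V \<psi> t x)"
        have E0: "0 \<le> E" unfolding E_def by simp
        have hE': "E \<le> Kb t x * \<psi>^2" using hE unfolding E_def .
        note ee = c_le_norm[of "z - zpsi Slo Shi Psi C \<beta> \<gamma> V \<psi> t x", folded E_def]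
        show "H1 Psi \<beta> \<gamma> V \<psi> t x z \<le>
                    - 1/2 * gtil Psi C \<beta> \<gamma> V t x * (if Slo < xSig x \<and> xSig x < Shi then 1 else 0) * \<psi>
                    + Mb * (Kb t x + (Kb t x)^2) * \<psi>\<^sup>2"
        proof (cases "Slo < xSig x \<and> xSig x < Shi")
          case True
          have zp: "zpsi Slo Shi Psi C \<beta> \<gamma> V \<psi> t x = zeta0 (xSig x) + \<psi> *\<^sub>R ztil Psi C \<beta> \<gamma> V t x"
            using True by (simp add: zpsi_def)
          have d1: "c1 z = \<psi>*(c1 Psi*(c1 (vvec \<beta> \<gamma> V t x) + -lam Psi C \<beta> \<gamma> V t x*c1 (cvec C t x)))
                 + c1 (z - zpsi Slo Shi Psi C \<beta> \<gamma> V \<psi> t x)"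
            unfolding zp by (simp add: hz zeta0_def)
          have d2: "c2 z - xSig x = \<psi>*(c2 Psi*(c2 (vvec \<beta> \<gamma> V t x) + -lam Psi C \<beta> \<gamma> V t x*c2 (cvec C t x)))
                 + c2 (z - zpsi Slo Shi Psi C \<beta> \<gamma> V \<psi> t x)"
            unfolding zp by (simp add: hz zeta0_def)
          have d3: "c3 z = \<psi>*(c3 Psi*(c3 (vvec \<beta> \<gamma> V t x) + -lam Psi C \<beta> \<gamma> V t x*c3 (cvec C t x)))
                 + c3 (z - zpsi Slo Shi Psi C \<beta> \<gamma> V \<psi> t x)"
            unfolding zp by (simp add: hz zeta0_def)
          have d4: "c4 z = \<psi>*(c4 Psi*(c4 (vvec \<beta> \<gamma> V t x) + (-lam Psi C \<beta> \<gamma> V t x*c4 (cvec C t x) + mu Psi C \<beta> \<gamma> V t x)))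
                 + c4 (z - zpsi Slo Shi Psi C \<beta> \<gamma> V \<psi> t x)"
            unfolding zp by (simp add: hz zeta0_def)
          note res = part_b_int[OF Pp ps0 PF(1) PF(7) PF(8) PF(9) PF(10) ee E0 hE' d1 d2 d3 d4]
          have one: "- 1/2 * gtil Psi C \<beta> \<gamma> V t x * (if Slo < xSig x \<and> xSig x < Shi then 1 else 0) * \<psi>
                 = - 1/2 * gtil Psi C \<beta> \<gamma> V t x * \<psi>" using True by simp
          show ?thesis unfolding one hH1 using res unfolding hg[symmetric] Mb_def by linarith
        next
          case False
          have zp: "zpsi Slo Shi Psi C \<beta> \<gamma> V \<psi> t x = zeta0 (xSig x)"
            using False unfolding zpsi_def by auto
          have ce: "c1 (z - zpsi Slo Shi Psi C \<beta> \<gamma> V \<psi> t x) = c1 z"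
                   "c2 (z - zpsi Slo Shi Psi C \<beta> \<gamma> V \<psi> t x) = c2 z - xSig x"
                   "c3 (z - zpsi Slo Shi Psi C \<beta> \<gamma> V \<psi> t x) = c3 z"
                   "c4 (z - zpsi Slo Shi Psi C \<beta> \<gamma> V \<psi> t x) = c4 z"
            unfolding zp by (simp_all add: zeta0_def)
          note res = part_b_bd[OF Pp ps0 PF(3) PF(4) PF(5) PF(6) ee E0 hE', unfolded ce]
          have zero: "- 1/2 * gtil Psi C \<beta> \<gamma> V t x * (if Slo < xSig x \<and> xSig x < Shi then 1 else 0) * \<psi> = 0"
            using False by auto
          show ?thesis unfolding zero hH1 using res unfolding Mb_def by linarith
        qed
      qed
    qed
  qed
qed

end
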